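(* Let $Q$ be a QNP and let $\pi$ be a policy for $Q$. If $\pi$ solves $Q$, then the policy $\pi^*$ defined in the context is a strong cyclic solution of the FOND problem $P=T(Q)$.
   Context: QNPs: $Q=\langle F,V,I,O,G\rangle$ with propositional variables $F$, numerical variables $V$ (non-negative reals), literals $p,\neg p$, $X=0$, $X>0$; actions with precondition $Pre(a)$, propositional effects $\mathit{Eff}(a)$, numerical effects $N(a)\subseteq\{Inc(X),Dec(X)\}$ (at most one per variable; $Dec(X)\in N(a)$ implies $X>0\in Pre(a)$); $a$ decrements $X$ if $Dec(X)\in N(a)$. A state assigns truth values to $F$ and reals $\ge0$ to $V$; initial states satisfy $I$ (closed world); goal states satisfy $G$; for applicable $a$, successors apply propositional effects, strictly increase $X$ for $Inc(X)$, strictly decrease $X$ for $Dec(X)$, rest unchanged. For $\epsilon>0$ an $\epsilon$-trajectory is such a sequence from an initial state where each change of a variable has magnitude $\ge\epsilon$ unless it goes from a value $<\epsilon$ to $0$. The boolean state $\bar s$ is the truth valuation on atoms $p\in F$ and $X=0$; a policy maps states to actions depending only on the boolean state; a maximal $\pi$-trajectory is infinite without goal, ends at its first goal state, or ends where $\pi$ is undefined/inapplicable; $\pi$ solves $Q$ iff for all $\epsilon>0$ all maximal $\epsilon$-$\pi$-trajectories reach a goal state. $T_D(Q)$ is the FOND problem over $F\cup\{p_{X=0}:X\in V\}$ reading $X=0$/$X>0$ as $p_{X=0}$/$\neg p_{X=0}$, replacing $Inc(X)$ by the deterministic effect $\neg p_{X=0}$ and $Dec(X)$ by the nondeterministic effect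 $\neg p_{X=0}\mid p_{X=0}$; its states are the boolean states and $\pi$ acts via $\bar s\mapsto\pi(s)$. $Dec(X)$/$Inc(X)$ actions are those with $Dec(X)$/$Inc(X)$ in $N(a)$. The policy graph $\mathcal G$ has as nodes the states of $T_D(Q)$ reachable from the initial state under $\pi$ and edges $(\bar s,\bar s')$ for $\bar s'$ a possible successor of $\bar s$ under $\pi(\bar s)$. Index the SCCs of $\mathcal G$ as $C_1,C_2,\dots$ so that if $C_i$ reaches $C_j$, $j\ne i$, then $i<j$; $scc(\bar s)$ is the index of the SCC containing $\bar s$. Fix a run of the following (modified) Sieve procedure on $\mathcal G$: repeatedly compute the SCCs of the current graph, choose an SCC $C$ and a variable $X$ such that $\pi(\bar s)$ is a $Dec(X)$ action for some $\bar s\in C$, $\pi(\bar s)$ is an $Inc(X)$ action for no $\bar s\in C$, and $X$ was not chosen in an earlier iteration for a component containing the states of $C$; remove all edges $(\bar s,\bar s')$ with $\bar s,\bar s'\in C$ and $\pi(\bar s)$ a $Dec(X)$ action; stop when no such choice exists. $stack(\bar s)$ is the sequence, in order of iterations, of the variables chosen in iterations whose chosen component contains $\bar s$. The FOND problem $T(Q)$: $n=|F|+|V|$, $Max=1+2^n$. Propositional variables: those of $T_D(Q)$, plus $in(X)$, $depth(d)$ ($0\le d\le|V|$), $index(X,d)$ ($1\le d\le|V|$), and counters $c(d)$ ($0\le d\le|V|$), $c_T$ over $\{0,\dots,Max\}$ encoded in binary; these encode a stack $\alpha$ of distinct variables ($X$ at position $d$ from the bottom iff $index(X,d)$; $|\alpha|=d$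 iff $depth(d)$). Initial state: that of $T_D(Q)$ plus $depth(0)$, counters $0$, other new atoms false; goal $G$. Actions: $Push(X,d)$ ($0\le d<|V|$): pre $\neg in(X),depth(d),c(d)<Max$; eff $in(X),index(X,d+1),depth(d+1),\neg depth(d),c(d):=c(d)+1,c(d+1):=0$. $Pop(X,d)$ ($1\le d\le|V|$): pre $in(X),index(X,d),depth(d)$; eff $\neg in(X),\neg index(X,d),\neg depth(d),depth(d-1)$. $Move$: pre $depth(0),c_T<Max$; eff $c_T:=c_T+1$. For $a\in O$ decrementing no variable: action $a$ with pre $Pre(a)$ plus $\neg in(Y)$ for each $Inc(Y)\in N(a)$, eff $\mathit{Eff}(a)$ plus $Y>0$ for each $Inc(Y)\in N(a)$. For $a$ decrementing some variable, $X$ decremented by $a$, $1\le d\le|V|$: action $a(X,d)$ with pre $Pre(a)$, $\neg in(Y)$ for $Inc(Y)\in N(a)$, $index(X,d)$; eff $\mathit{Eff}(a)$, $Y>0$ for $Inc(Y)\in N(a)$, nondeterministic $Z>0\mid Z=0$ for each $Dec(Z)\in N(a)$, $c(d'):=0$ for $d\le d'\le|V|$. A strong cyclic solution of a FOND problem is a policy such that from every state reachable from the initial state under it some goal state is reachable under it. States of $T(Q)$ are triples $\langle\bar s,c,\alpha\rangle$ (boolean state, counter values, stack). A stack $\alpha=X_1\cdots X_k$ is a prefix of $Z_1\cdots Z_m$ if $k\le m$ and $X_i=Z_i$ for $i\le k$; $\alpha X$ is $\alpha$ with $X$ pushed on top. $\pi^*(\langle\bar s,c,\alpha\rangle)$ is,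 taking the first applicable case: $Pop(X,d)$ if $c_T<scc(\bar s)$, $X$ is the top of $\alpha$ and $d=|\alpha|$; $Move$ if $c_T<scc(\bar s)$ and $\alpha$ is empty; $Pop(X,d)$ if $X$ is the top of $\alpha$, $d=|\alpha|$ and $\alpha$ is not a prefix of $stack(\bar s)$; $Push(X,d)$ if $\alpha X$ is a prefix of $stack(\bar s)$ and $d=|\alpha|$; $a$ if $\pi(\bar s)=a$ decrements no variable; $a(X,d)$ if $\pi(\bar s)=a$ decrements $X$, $X$ is at depth $d$ in $\alpha$, and $a$ decrements no other variable at a depth $d'<d$ in $\alpha$. *)

theory Defs
  imports Complex_Main "HOL-Library.Sublist"
begin

section \<open>Qualitative numerical problems (QNPs)\<close>

text \<open>Literals: p, not p (p in F), X = 0, X > 0 (X in V).\<close>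
datatype ('f,'v) lit = PT 'f | PF 'f | Zero 'v | Pos 'v

text \<open>Numerical effects: at most one per variable, hence a partial function.\<close>
datatype neff = Inc | Dec

record ('f,'v,'a) qnp =
  qF   :: "'f set"
  qV   :: "'v set"
  qI   :: "('f,'v) lit set"
  qO   :: "'a set"
  qPre :: "'a \<Rightarrow> ('f,'v) lit set"
  qEff :: "'a \<Rightarrow> ('f,'v) lit set"
  qN   :: "'a \<Rightarrow> 'v \<Rightarrow> neff option"
  qG   :: "('f,'v) lit set"

definition lit_over :: "'f set \<Rightarrow> 'v set \<Rightarrow> ('f,'v) lit \<Rightarrow> bool" where
  "lit_over F V l = (case l of PT p \<Rightarrow> p \<in> F | PF p \<Rightarrow> p \<in> F
                      | Zero X \<Rightarrow> X \<in> V | Pos X \<Rightarrow> X \<in> V)"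

definition consistent_lits :: "('f,'v) lit set \<Rightarrow> bool" where
  "consistent_lits L = ((\<forall>p. \<not> (PT p \<in> L \<and> PF p \<in> L)) \<and> (\<forall>X. \<not> (Zero X \<in> L \<and> Pos X \<in> L)))"

definition wf_qnp :: "('f,'v,'a) qnp \<Rightarrow> bool" where
  "wf_qnp Q = (finite (qF Q) \<and> finite (qV Q) \<and> finite (qO Q)
     \<and> (\<forall>l\<in>qI Q. lit_over (qF Q) (qV Q) l) \<and> consistent_lits (qI Q)
     \<and> (\<forall>l\<in>qG Q. lit_over (qF Q) (qV Q) l)
     \<and> (\<forall>a\<in>qO Q. (\<forall>l\<in>qPre Q a. lit_over (qF Q) (qV Q) l)
          \<and> (\<forall>l\<in>qEff Q a. (\<exists>p\<in>qF Q. l = PT p \<or> l = PF p))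
          \<and> consistent_lits (qEff Q a)
          \<and> (\<forall>X. qN Q a X \<noteq> None \<longrightarrow> X \<in> qV Q)
          \<and> (\<forall>X. qN Q a X = Some Dec \<longrightarrow> Pos X \<in> qPre Q a)))"

text \<open>QNP states: truth values of atoms and non-negative reals for the numerical variables.\<close>
type_synonym ('f,'v) qstate = "('f \<Rightarrow> bool) \<times> ('v \<Rightarrow> real)"
text \<open>Boolean states: truth values of atoms p and of atoms X = 0.\<close>
type_synonym ('f,'v) bstate = "('f \<Rightarrow> bool) \<times> ('v \<Rightarrow> bool)"

fun holds_q :: "('f,'v) qstate \<Rightarrow> ('f,'v) lit \<Rightarrow> bool" where
  "holds_q (\<sigma>, x) (PT p) = \<sigma> p"
| "holds_q (\<sigma>, x) (PF p) = (\<not> \<sigma> p)"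
| "holds_q (\<sigma>, x) (Zero X) = (x X = 0)"
| "holds_q (\<sigma>, x) (Pos X) = (x X > 0)"

fun holds_b :: "('f,'v) bstate \<Rightarrow> ('f,'v) lit \<Rightarrow> bool" where
  "holds_b (\<sigma>, z) (PT p) = \<sigma> p"
| "holds_b (\<sigma>, z) (PF p) = (\<not> \<sigma> p)"
| "holds_b (\<sigma>, z) (Zero X) = z X"
| "holds_b (\<sigma>, z) (Pos X) = (\<not> z X)"

definition bar :: "('f,'v,'a) qnp \<Rightarrow> ('f,'v) qstate \<Rightarrow> ('f,'v) bstate" where
  "bar Q s = (fst s, \<lambda>X. X \<in> qV Q \<and> snd s X = 0)"

definition apply_eff :: "('f,'v) lit set \<Rightarrow> ('f \<Rightarrow> bool) \<Rightarrow> ('f \<Rightarrow> bool)" where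
  "apply_eff E \<sigma> = (\<lambda>p. if PT p \<in> E then True else if PF p \<in> E then False else \<sigma> p)"

text \<open>Initial states (closed world for the propositional atoms and the atoms X = 0).\<close>
definition q_init :: "('f,'v,'a) qnp \<Rightarrow> ('f,'v) qstate \<Rightarrow> bool" where
  "q_init Q s = ((\<forall>p. fst s p = (PT p \<in> qI Q)) \<and> (\<forall>X. snd s X \<ge> 0)
                 \<and> (\<forall>X\<in>qV Q. snd s X = 0 \<longleftrightarrow> Zero X \<in> qI Q))"

definition q_goal :: "('f,'v,'a) qnp \<Rightarrow> ('f,'v) qstate \<Rightarrow> bool" where
  "q_goal Q s = (\<forall>l\<in>qG Q. holds_q s l)"

definition q_app :: "('f,'v,'a) qnp \<Rightarrow> 'a \<Rightarrow> ('f,'v) qstate \<Rightarrow> bool" where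
  "q_app Q a s = (a \<in> qO Q \<and> (\<forall>l\<in>qPre Q a. holds_q s l))"

definition q_succ :: "('f,'v,'a) qnp \<Rightarrow> 'a \<Rightarrow> ('f,'v) qstate \<Rightarrow> ('f,'v) qstate \<Rightarrow> bool" where
  "q_succ Q a s s' = (fst s' = apply_eff (qEff Q a) (fst s)
     \<and> (\<forall>X. case qN Q a X of
              Some Inc \<Rightarrow> snd s' X > snd s X
            | Some Dec \<Rightarrow> snd s' X < snd s X \<and> snd s' X \<ge> 0
            | None \<Rightarrow> snd s' X = snd s X))"

definition eps_ok :: "real \<Rightarrow> ('v \<Rightarrow> real) \<Rightarrow> ('v \<Rightarrow> real) \<Rightarrow> bool" where
  "eps_ok \<epsilon> x x' = (\<forall>X. x' X \<noteq> x X \<longrightarrow> (\<bar>x' X - x X\<bar> \<ge> \<epsilon> \<or> (x X < \<epsilon> \<and> x' X = 0)))"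

type_synonym ('f,'v,'a) policy = "('f,'v) bstate \<Rightarrow> 'a option"

definition is_policy :: "('f,'v,'a) qnp \<Rightarrow> ('f,'v,'a) policy \<Rightarrow> bool" where
  "is_policy Q \<pi> = (\<forall>b a. \<pi> b = Some a \<longrightarrow> a \<in> qO Q)"

definition q_step :: "('f,'v,'a) qnp \<Rightarrow> ('f,'v,'a) policy \<Rightarrow> real
                       \<Rightarrow> ('f,'v) qstate \<Rightarrow> ('f,'v) qstate \<Rightarrow> bool" where
  "q_step Q \<pi> \<epsilon> s s' = (\<exists>a. \<pi> (bar Q s) = Some a \<and> q_app Q a s \<and> q_succ Q a s s'
                             \<and> eps_ok \<epsilon> (snd s) (snd s'))"

text \<open>pi solves Q: for every eps > 0, every maximal eps-pi-trajectory reaches a goal, i.e.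
  (i) every infinite eps-pi-trajectory contains a goal state, and
  (ii) every finite goal-free eps-pi-trajectory can be extended by an applicable pi-action.\<close>
definition solves :: "('f,'v,'a) qnp \<Rightarrow> ('f,'v,'a) policy \<Rightarrow> bool" where
  "solves Q \<pi> = (\<forall>\<epsilon>>0.
     (\<forall>f :: nat \<Rightarrow> ('f,'v) qstate. q_init Q (f 0) \<and> (\<forall>i. q_step Q \<pi> \<epsilon> (f i) (f (Suc i)))
          \<longrightarrow> (\<exists>i. q_goal Q (f i)))
   \<and> (\<forall>(f :: nat \<Rightarrow> ('f,'v) qstate) n. q_init Q (f 0) \<and> (\<forall>i<n. q_step Q \<pi> \<epsilon> (f i) (f (Suc i)))
          \<and> (\<forall>i\<le>n. \<not> q_goal Q (f i))
          \<longrightarrow> (\<exists>a. \<pi> (bar Q (f n)) = Some a \<and> q_app Q a (f n))))"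

section \<open>The FOND problem T_D(Q) and the policy graph\<close>

definition td_init :: "('f,'v,'a) qnp \<Rightarrow> ('f,'v) bstate" where
  "td_init Q = (\<lambda>p. PT p \<in> qI Q, \<lambda>X. Zero X \<in> qI Q)"

definition td_goal :: "('f,'v,'a) qnp \<Rightarrow> ('f,'v) bstate \<Rightarrow> bool" where
  "td_goal Q b = (\<forall>l\<in>qG Q. holds_b b l)"

definition td_app :: "('f,'v,'a) qnp \<Rightarrow> 'a \<Rightarrow> ('f,'v) bstate \<Rightarrow> bool" where
  "td_app Q a b = (a \<in> qO Q \<and> (\<forall>l\<in>qPre Q a. holds_b b l))"

text \<open>Inc(X) becomes the effect X>0; Dec(X) the non-deterministic effect X>0 | X=0.\<close>
definition td_succ :: "('f,'v,'a) qnp \<Rightarrow> 'a \<Rightarrow> ('f,'v) bstate \<Rightarrow> ('f,'v) bstate \<Rightarrow> bool" where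
  "td_succ Q a b b' = (fst b' = apply_eff (qEff Q a) (fst b)
     \<and> (\<forall>X. case qN Q a X of
              Some Inc \<Rightarrow> snd b' X = False
            | Some Dec \<Rightarrow> True
            | None \<Rightarrow> snd b' X = snd b X))"

definition pg_rel :: "('f,'v,'a) qnp \<Rightarrow> ('f,'v,'a) policy \<Rightarrow> (('f,'v) bstate \<times> ('f,'v) bstate) set" where
  "pg_rel Q \<pi> = {(b, b'). \<not> td_goal Q b \<and> (\<exists>a. \<pi> b = Some a \<and> td_app Q a b \<and> td_succ Q a b b')}"

definition pg_nodes :: "('f,'v,'a) qnp \<Rightarrow> ('f,'v,'a) policy \<Rightarrow> ('f,'v) bstate set" where
  "pg_nodes Q \<pi> = {b. (td_init Q, b) \<in> (pg_rel Q \<pi>)\<^sup>*}"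

definition pg_edges :: "('f,'v,'a) qnp \<Rightarrow> ('f,'v,'a) policy \<Rightarrow> (('f,'v) bstate \<times> ('f,'v) bstate) set" where
  "pg_edges Q \<pi> = {(b, b') \<in> pg_rel Q \<pi>. b \<in> pg_nodes Q \<pi>}"

text \<open>sc is an indexing C_1, C_2, ..., C_m of the SCCs of the policy graph compatible with
  reachability (sc b = index of the SCC containing b).\<close>
definition scc_indexing :: "('f,'v,'a) qnp \<Rightarrow> ('f,'v,'a) policy \<Rightarrow> (('f,'v) bstate \<Rightarrow> nat) \<Rightarrow> bool" where
  "scc_indexing Q \<pi> sc = (let N = pg_nodes Q \<pi>; E = pg_edges Q \<pi> in
      (\<forall>b\<in>N. \<forall>b'\<in>N. sc b = sc b' \<longleftrightarrow> ((b, b') \<in> E\<^sup>* \<and> (b', b) \<in> E\<^sup>*))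
    \<and> (\<forall>b\<in>N. \<forall>b'\<in>N. (b, b') \<in> E\<^sup>* \<and> sc b \<noteq> sc b' \<longrightarrow> sc b < sc b')
    \<and> (\<exists>m. sc ` N = {1..m}))"

section \<open>The (modified) Sieve procedure\<close>

definition is_dec :: "('f,'v,'a) qnp \<Rightarrow> ('f,'v,'a) policy \<Rightarrow> ('f,'v) bstate \<Rightarrow> 'v \<Rightarrow> bool" where
  "is_dec Q \<pi> b X = (\<exists>a. \<pi> b = Some a \<and> qN Q a X = Some Dec)"

definition is_inc :: "('f,'v,'a) qnp \<Rightarrow> ('f,'v,'a) policy \<Rightarrow> ('f,'v) bstate \<Rightarrow> 'v \<Rightarrow> bool" where
  "is_inc Q \<pi> b X = (\<exists>a. \<pi> b = Some a \<and> qN Q a X = Some Inc)"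

text \<open>A run of the Sieve is recorded as the list of its choices (component, variable).\<close>
type_synonym ('f,'v) sieve_run = "(('f,'v) bstate set \<times> 'v) list"

text \<open>Edges of the current graph before iteration k.\<close>
definition sieve_edges :: "('f,'v,'a) qnp \<Rightarrow> ('f,'v,'a) policy \<Rightarrow> ('f,'v) sieve_run \<Rightarrow> nat
                            \<Rightarrow> (('f,'v) bstate \<times> ('f,'v) bstate) set" where
  "sieve_edges Q \<pi> run k = pg_edges Q \<pi> -
     {(b, b'). \<exists>j<k. b \<in> fst (run ! j) \<and> b' \<in> fst (run ! j) \<and> is_dec Q \<pi> b (snd (run ! j))}"

definition is_scc :: "'n set \<Rightarrow> ('n \<times> 'n) set \<Rightarrow> 'n set \<Rightarrow> bool" where
  "is_scc N E C = (\<exists>b\<in>N. C = {b'\<in>N. (b, b') \<in> E\<^sup>* \<and> (b', b) \<in> E\<^sup>*})"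

definition sieve_choice :: "('f,'v,'a) qnp \<Rightarrow> ('f,'v,'a) policy \<Rightarrow> ('f,'v) sieve_run \<Rightarrow> nat
                             \<Rightarrow> ('f,'v) bstate set \<Rightarrow> 'v \<Rightarrow> bool" where
  "sieve_choice Q \<pi> run k C X =
     (is_scc (pg_nodes Q \<pi>) (sieve_edges Q \<pi> run k) C
      \<and> (\<exists>b\<in>C. is_dec Q \<pi> b X) \<and> (\<forall>b\<in>C. \<not> is_inc Q \<pi> b X)
      \<and> (\<forall>j<k. C \<subseteq> fst (run ! j) \<longrightarrow> snd (run ! j) \<noteq> X))"

definition sieve_run :: "('f,'v,'a) qnp \<Rightarrow> ('f,'v,'a) policy \<Rightarrow> ('f,'v) sieve_run \<Rightarrow> bool" where
  "sieve_run Q \<pi> run =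
     ((\<forall>k<length run. sieve_choice Q \<pi> run k (fst (run ! k)) (snd (run ! k)))
      \<and> \<not> (\<exists>C X. sieve_choice Q \<pi> run (length run) C X))"

definition stack :: "('f,'v) sieve_run \<Rightarrow> ('f,'v) bstate \<Rightarrow> 'v list" where
  "stack run b = map snd (filter (\<lambda>(C, X). b \<in> C) run)"

section \<open>The FOND problem T(Q)\<close>

text \<open>States of T(Q): (boolean state, counters c(d), counter c_T, stack alpha listed from the bottom).
  in(X) iff X in set alpha; depth(d) iff length alpha = d; index(X,d) iff alpha!(d-1) = X.\<close>
type_synonym ('f,'v) tstate = "('f,'v) bstate \<times> (nat \<Rightarrow> nat) \<times> nat \<times> 'v list"

datatype ('v,'a) tact = Push 'v nat | Pop 'v nat | Move | Act 'a | DAct 'a 'v nat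

definition Tmax :: "('f,'v,'a) qnp \<Rightarrow> nat" where
  "Tmax Q = 1 + 2 ^ (card (qF Q) + card (qV Q))"

definition decrements_some :: "('f,'v,'a) qnp \<Rightarrow> 'a \<Rightarrow> bool" where
  "decrements_some Q a = (\<exists>X. qN Q a X = Some Dec)"

fun t_app :: "('f,'v,'a) qnp \<Rightarrow> ('v,'a) tact \<Rightarrow> ('f,'v) tstate \<Rightarrow> bool" where
  "t_app Q (Push X d) (b, c, cT, \<alpha>) =
     (X \<in> qV Q \<and> d < card (qV Q) \<and> X \<notin> set \<alpha> \<and> length \<alpha> = d \<and> c d < Tmax Q)"
| "t_app Q (Pop X d) (b, c, cT, \<alpha>) =
     (X \<in> qV Q \<and> 1 \<le> d \<and> d \<le> card (qV Q) \<and> X \<in> set \<alpha> \<and> d \<le> length \<alpha> \<and> \<alpha> ! (d - 1) = X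
      \<and> length \<alpha> = d)"
| "t_app Q Move (b, c, cT, \<alpha>) = (length \<alpha> = 0 \<and> cT < Tmax Q)"
| "t_app Q (Act a) (b, c, cT, \<alpha>) =
     (\<not> decrements_some Q a \<and> td_app Q a b \<and> (\<forall>Y. qN Q a Y = Some Inc \<longrightarrow> Y \<notin> set \<alpha>))"
| "t_app Q (DAct a X d) (b, c, cT, \<alpha>) =
     (qN Q a X = Some Dec \<and> 1 \<le> d \<and> d \<le> card (qV Q) \<and> td_app Q a b
      \<and> (\<forall>Y. qN Q a Y = Some Inc \<longrightarrow> Y \<notin> set \<alpha>) \<and> d \<le> length \<alpha> \<and> \<alpha> ! (d - 1) = X)"

fun t_succ :: "('f,'v,'a) qnp \<Rightarrow> ('v,'a) tact \<Rightarrow> ('f,'v) tstate \<Rightarrow> ('f,'v) tstate \<Rightarrow> bool" where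
  "t_succ Q (Push X d) (b, c, cT, \<alpha>) s' = (s' = (b, c(d := c d + 1, d + 1 := 0), cT, \<alpha> @ [X]))"
| "t_succ Q (Pop X d) (b, c, cT, \<alpha>) s' = (s' = (b, c, cT, butlast \<alpha>))"
| "t_succ Q Move (b, c, cT, \<alpha>) s' = (s' = (b, c, cT + 1, \<alpha>))"
| "t_succ Q (Act a) (b, c, cT, \<alpha>) s' = (\<exists>b'. td_succ Q a b b' \<and> s' = (b', c, cT, \<alpha>))"
| "t_succ Q (DAct a X d) (b, c, cT, \<alpha>) s' =
     (\<exists>b'. td_succ Q a b b'
        \<and> s' = (b', \<lambda>d'. if d \<le> d' \<and> d' \<le> card (qV Q) then 0 else c d', cT, \<alpha>))"

definition t_init :: "('f,'v,'a) qnp \<Rightarrow> ('f,'v) tstate" where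
  "t_init Q = (td_init Q, \<lambda>_. 0, 0, [])"

definition t_goal :: "('f,'v,'a) qnp \<Rightarrow> ('f,'v) tstate \<Rightarrow> bool" where
  "t_goal Q s = td_goal Q (fst s)"

definition t_rel :: "('f,'v,'a) qnp \<Rightarrow> (('f,'v) tstate \<Rightarrow> ('v,'a) tact option)
                      \<Rightarrow> (('f,'v) tstate \<times> ('f,'v) tstate) set" where
  "t_rel Q P = {(s, s'). \<not> t_goal Q s \<and> (\<exists>A. P s = Some A \<and> t_app Q A s \<and> t_succ Q A s s')}"

definition strong_cyclic :: "('f,'v,'a) qnp \<Rightarrow> (('f,'v) tstate \<Rightarrow> ('v,'a) tact option) \<Rightarrow> bool" where
  "strong_cyclic Q P = (\<forall>s. (t_init Q, s) \<in> (t_rel Q P)\<^sup>* \<longrightarrow>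
                           (\<exists>g. (s, g) \<in> (t_rel Q P)\<^sup>* \<and> t_goal Q g))"

fun pistar :: "('f,'v,'a) qnp \<Rightarrow> ('f,'v,'a) policy \<Rightarrow> (('f,'v) bstate \<Rightarrow> nat) \<Rightarrow> ('f,'v) sieve_run
               \<Rightarrow> ('f,'v) tstate \<Rightarrow> ('v,'a) tact option" where
  "pistar Q \<pi> sc run (b, c, cT, \<alpha>) =
    (if cT < sc b \<and> \<alpha> \<noteq> [] then Some (Pop (last \<alpha>) (length \<alpha>))
     else if cT < sc b \<and> \<alpha> = [] then Some Move
     else if \<alpha> \<noteq> [] \<and> \<not> prefix \<alpha> (stack run b) then Some (Pop (last \<alpha>) (length \<alpha>))
     else if (\<exists>X. prefix (\<alpha> @ [X]) (stack run b))
       then Some (Push (SOME X. prefix (\<alpha> @ [X]) (stack run b)) (length \<alpha>))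
     else (case \<pi> b of
             None \<Rightarrow> None
           | Some a \<Rightarrow>
              (if \<not> decrements_some Q a then Some (Act a)
               else if (\<exists>X d. qN Q a X = Some Dec \<and> 1 \<le> d \<and> d \<le> length \<alpha> \<and> \<alpha> ! (d - 1) = X
                          \<and> (\<forall>d'. 1 \<le> d' \<and> d' < d \<longrightarrow> qN Q a (\<alpha> ! (d' - 1)) \<noteq> Some Dec))
               then Some (case (SOME (X, d). qN Q a X = Some Dec \<and> 1 \<le> d \<and> d \<le> length \<alpha>
                                  \<and> \<alpha> ! (d - 1) = X
                                  \<and> (\<forall>d'. 1 \<le> d' \<and> d' < d \<longrightarrow> qN Q a (\<alpha> ! (d' - 1)) \<noteq> Some Dec))
                          of (X, d) \<Rightarrow> DAct a X d)
               else None)))"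

end

theory Submission
  imports Defs
begin


locale ctx =
  fixes Q :: "('f,'v,'a) qnp" and \<pi> :: "('f,'v,'a) policy"
    and sc :: "('f,'v) bstate \<Rightarrow> nat" and run :: "('f,'v) sieve_run"
  assumes wf: "wf_qnp Q" and pol: "is_policy Q \<pi>" and sol: "solves Q \<pi>"
    and sci: "scc_indexing Q \<pi> sc" and sr: "sieve_run Q \<pi> run"
begin

abbreviation "N \<equiv> pg_nodes Q \<pi>"
abbreviation "E \<equiv> pg_edges Q \<pi>"
abbreviation "R \<equiv> pg_rel Q \<pi>"

lemma finF: "finite (qF Q)" and finV: "finite (qV Q)"
  using wf by (auto simp: wf_qnp_def)

lemma wfa:
  assumes "a \<in> qO Q"
  shows "\<forall>l\<in>qPre Q a. lit_over (qF Q) (qV Q) l"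
    "\<forall>l\<in>qEff Q a. (\<exists>p\<in>qF Q. l = PT p \<or> l = PF p)"
    "qN Q a X \<noteq> None \<Longrightarrow> X \<in> qV Q"
    "qN Q a X = Some Dec \<Longrightarrow> Pos X \<in> qPre Q a"
  using wf assms unfolding wf_qnp_def by blast+

lemma pol_O: "\<pi> b = Some a \<Longrightarrow> a \<in> qO Q"
  using pol unfolding is_policy_def by blast

definition BS :: "('f,'v) bstate set" where
  "BS = {b. (\<forall>p. fst b p \<longrightarrow> p \<in> qF Q) \<and> (\<forall>X. snd b X \<longrightarrow> X \<in> qV Q)}"

lemma init_BS: "td_init Q \<in> BS"
  using wf unfolding BS_def td_init_def wf_qnp_def lit_over_def by force

lemma R_BS: "(b, b') \<in> R \<Longrightarrow> b \<in> BS \<Longrightarrow> b' \<in> BS"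
proof -
  assume r: "(b, b') \<in> R" and b: "b \<in> BS"
  then obtain a where a: "\<pi> b = Some a" "td_app Q a b" "td_succ Q a b b'"
    by (auto simp: pg_rel_def)
  have aO: "a \<in> qO Q" using a by (auto simp: td_app_def)
  have "fst b' p \<Longrightarrow> p \<in> qF Q" for p
  proof -
    assume h: "fst b' p"
    have "fst b' = apply_eff (qEff Q a) (fst b)" using a by (auto simp: td_succ_def)
    with h have "PT p \<in> qEff Q a \<or> fst b p" by (auto simp: apply_eff_def split: if_splits)
    then show ?thesis using wfa(2)[OF aO] b by (auto simp: BS_def)
  qed
  moreover have "snd b' X \<Longrightarrow> X \<in> qV Q" for X
  proof -
    assume h: "snd b' X"
    have c: "case qN Q a X of Some Inc \<Rightarrow> snd b' X = False | Some Dec \<Rightarrow> True | None \<Rightarrow> snd b' X = snd b X"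
      using a by (auto simp: td_succ_def)
    show ?thesis
    proof (cases "qN Q a X")
      case None then show ?thesis using c h b by (auto simp: BS_def)
    next
      case (Some e) then show ?thesis using wfa(3)[OF aO, of X] by auto
    qed
  qed
  ultimately show ?thesis by (auto simp: BS_def)
qed

lemma N_BS: "b \<in> N \<Longrightarrow> b \<in> BS"
proof -
  assume "b \<in> N"
  then have "(td_init Q, b) \<in> R\<^sup>*" by (simp add: pg_nodes_def)
  then show ?thesis
    by (induction rule: rtrancl_induct) (auto intro: init_BS R_BS)
qed

lemma card_BS: "finite BS \<and> card BS \<le> 2 ^ (card (qF Q) + card (qV Q))"
proof -
  let ?f = "\<lambda>(A, B). ((\<lambda>p. p \<in> A), (\<lambda>X. X \<in> B))"
  have "BS \<subseteq> ?f ` (Pow (qF Q) \<times> Pow (qV Q))"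
  proof
    fix b assume "b \<in> BS"
    then have "b = ?f ({p. fst b p}, {X. snd b X})" "({p. fst b p}, {X. snd b X}) \<in> Pow (qF Q) \<times> Pow (qV Q)"
      by (auto simp: BS_def)
    then show "b \<in> ?f ` (Pow (qF Q) \<times> Pow (qV Q))" by blast
  qed
  moreover have "finite (Pow (qF Q) \<times> Pow (qV Q))" using finF finV by auto
  moreover have "card (Pow (qF Q) \<times> Pow (qV Q)) = 2 ^ (card (qF Q) + card (qV Q))"
    using finF finV by (simp add: card_cartesian_product card_Pow power_add)
  ultimately show ?thesis
    by (metis (no_types, lifting) card_image_le finite_surj order.trans card_mono finite_imageI)
qed

lemma finN: "finite N" and cardN: "card N \<le> 2 ^ (card (qF Q) + card (qV Q))"
proof -
  have "N \<subseteq> BS" using N_BS by blast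
  then show "finite N" "card N \<le> 2 ^ (card (qF Q) + card (qV Q))"
    using card_BS by (auto intro: finite_subset dest: card_mono)
qed

lemma N_init: "td_init Q \<in> N" by (simp add: pg_nodes_def)

lemma N_R: "b \<in> N \<Longrightarrow> (b, b') \<in> R \<Longrightarrow> b' \<in> N"
  by (auto simp: pg_nodes_def)

lemma N_Rs: "b \<in> N \<Longrightarrow> (b, b') \<in> R\<^sup>* \<Longrightarrow> b' \<in> N"
  by (auto simp: pg_nodes_def)

lemma E_N: "(b, b') \<in> E \<Longrightarrow> b \<in> N \<and> b' \<in> N \<and> (b, b') \<in> R"
  by (auto simp: pg_edges_def pg_nodes_def)

lemma holds_bar: "lit_over (qF Q) (qV Q) l \<Longrightarrow> \<forall>X. snd s X \<ge> 0 \<Longrightarrow> holds_q s l = holds_b (bar Q s) l"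
  by (cases s; cases l) (auto simp: bar_def lit_over_def order_less_le)

lemma goal_bar: "\<forall>X. snd s X \<ge> 0 \<Longrightarrow> q_goal Q s = td_goal Q (bar Q s)"
  using wf holds_bar unfolding q_goal_def td_goal_def wf_qnp_def by blast

lemma app_bar: "\<forall>X. snd s X \<ge> 0 \<Longrightarrow> q_app Q a s = td_app Q a (bar Q s)"
  using holds_bar wfa(1) unfolding q_app_def td_app_def by blast


section \<open>Realization of boolean paths\<close>

definition act :: "(nat \<Rightarrow> ('f,'v) bstate) \<Rightarrow> nat \<Rightarrow> 'a" where
  "act p i = the (\<pi> (p i))"
definition decpos where
  "decpos p ok X i = (ok i \<and> qN Q (act p i) X = Some Dec \<and> \<not> snd (p (Suc i)) X)"
definition rst where
  "rst p ok X i = (ok i \<and> (qN Q (act p i) X = Some Inc \<or> (qN Q (act p i) X = Some Dec \<and> snd (p (Suc i)) X)))"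
definition cnd where
  "cnd p ok X k = (rst p ok X k \<or> (\<forall>j\<ge>k. \<not> decpos p ok X j))"
definition mm where
  "mm p ok X i = (LEAST k. i \<le> k \<and> cnd p ok X k)"
definition DD where
  "DD p ok X i = card {j. i \<le> j \<and> j < mm p ok X i \<and> decpos p ok X j}"
definition II where
  "II p ok X i = card {j. j < i \<and> ok j \<and> qN Q (act p j) X = Some Inc}"
definition vv :: "(nat \<Rightarrow> ('f,'v) bstate) \<Rightarrow> (nat \<Rightarrow> bool) \<Rightarrow> nat \<Rightarrow> nat \<Rightarrow> 'v \<Rightarrow> real" where
  "vv p ok K i X = (if snd (p i) X then 0 else real (DD p ok X i + 1 + (K + 2) * II p ok X i))"

lemma DD_le:
  assumes "\<exists>k. i \<le> k \<and> k \<le> i + K \<and> cnd p ok X k"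
  shows "DD p ok X i \<le> K"
proof -
  from assms obtain k where k: "i \<le> k" "k \<le> i + K" "cnd p ok X k" by blast
  have "mm p ok X i \<le> k" unfolding mm_def using k by (intro Least_le) auto
  then have "{j. i \<le> j \<and> j < mm p ok X i \<and> decpos p ok X j} \<subseteq> {i..<i+K}" using k by auto
  then have "DD p ok X i \<le> card {i..<i+K}" unfolding DD_def by (intro card_mono) auto
  then show ?thesis by simp
qed

lemma mm_ge: "(\<exists>k. i \<le> k \<and> cnd p ok X k) \<Longrightarrow> i \<le> mm p ok X i \<and> cnd p ok X (mm p ok X i)"
  unfolding mm_def by (rule LeastI_ex) 

lemma DD_same:
  assumes "\<not> rst p ok X i" "\<not> decpos p ok X i"
  shows "DD p ok X (Suc i) = DD p ok X i"
proof (cases "cnd p ok X i")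
  case True
  then have nd: "\<forall>j\<ge>i. \<not> decpos p ok X j" using assms by (auto simp: cnd_def)
  have "mm p ok X i = i" unfolding mm_def using True by (intro Least_equality) auto
  then have "DD p ok X i = 0" by (simp add: DD_def)
  moreover have "DD p ok X (Suc i) = 0" using nd unfolding DD_def by auto
  ultimately show ?thesis by simp
next
  case False
  have eq: "(\<lambda>k. i \<le> k \<and> cnd p ok X k) = (\<lambda>k. Suc i \<le> k \<and> cnd p ok X k)"
    using False by (auto simp: le_Suc_eq intro!: ext) (metis le_antisym not_less_eq_eq)
  have "mm p ok X i = mm p ok X (Suc i)" unfolding mm_def eq ..
  moreover have "{j. i \<le> j \<and> j < M \<and> decpos p ok X j} = {j. Suc i \<le> j \<and> j < M \<and> decpos p ok X j}" for M
    using assms(2) by (auto simp: le_Suc_eq) (metis le_antisym not_less_eq_eq)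
  ultimately show ?thesis unfolding DD_def by simp
qed

lemma DD_dec:
  assumes "decpos p ok X i" and ex: "\<exists>k. i \<le> k \<and> cnd p ok X k"
  shows "DD p ok X i = Suc (DD p ok X (Suc i))"
proof -
  have nr: "\<not> rst p ok X i" using assms by (auto simp: rst_def decpos_def)
  have nc: "\<not> cnd p ok X i" using assms nr by (auto simp: cnd_def)
  have eq: "(\<lambda>k. i \<le> k \<and> cnd p ok X k) = (\<lambda>k. Suc i \<le> k \<and> cnd p ok X k)"
    using nc by (auto simp: le_Suc_eq intro!: ext) (metis le_antisym not_less_eq_eq)
  have mmeq: "mm p ok X i = mm p ok X (Suc i)" unfolding mm_def eq ..
  have "i \<le> mm p ok X i \<and> cnd p ok X (mm p ok X i)" using mm_ge[OF ex] .
  then have lt: "i < mm p ok X i" using nc by (metis le_neq_implies_less)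
  have "{j. i \<le> j \<and> j < mm p ok X i \<and> decpos p ok X j}
      = insert i {j. Suc i \<le> j \<and> j < mm p ok X (Suc i) \<and> decpos p ok X j}"
    using lt assms(1) mmeq by (auto simp: le_Suc_eq)
  then show ?thesis unfolding DD_def by simp
qed

lemma II_Suc:
  "II p ok X (Suc i) = II p ok X i + (if ok i \<and> qN Q (act p i) X = Some Inc then 1 else 0)"
proof -
  have "{j. j < Suc i \<and> ok j \<and> qN Q (act p j) X = Some Inc}
     = {j. j < i \<and> ok j \<and> qN Q (act p j) X = Some Inc} \<union>
       (if ok i \<and> qN Q (act p i) X = Some Inc then {i} else {})"
    by (auto simp: less_Suc_eq)
  then show ?thesis unfolding II_def by (auto simp: card_insert_if)
qed

lemma realize:
  assumes p0: "p 0 = td_init Q" and pN: "\<forall>i. p i \<in> N" and st: "\<forall>i. ok i \<longrightarrow> (p i, p (Suc i)) \<in> R"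
    and bd: "\<forall>X i. \<exists>k. i \<le> k \<and> k \<le> i + K \<and> cnd p ok X k"
  shows "\<exists>f. q_init Q (f 0) \<and> (\<forall>i. ok i \<longrightarrow> q_step Q \<pi> 1 (f i) (f (Suc i)))
          \<and> (\<forall>i. bar Q (f i) = p i) \<and> (\<forall>i X. snd (f i) X \<ge> 0)"
proof -
  define f where "f i = (fst (p i), vv p ok K i)" for i
  have nn: "\<forall>i X. snd (f i) X \<ge> 0" by (simp add: f_def vv_def)
  have vz: "vv p ok K i X = 0 \<longleftrightarrow> snd (p i) X" for i X
  proof -
    have "(DD p ok X i + 1 + (K + 2) * II p ok X i) \<noteq> 0" by simp
    then have "real (DD p ok X i + 1 + (K + 2) * II p ok X i) \<noteq> 0" by (metis of_nat_eq_0_iff)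
    then show ?thesis unfolding vv_def by auto
  qed
  have barf: "bar Q (f i) = p i" for i
  proof -
    have "p i \<in> BS" using pN N_BS by blast
    then have "(\<lambda>X. X \<in> qV Q \<and> snd (p i) X) = snd (p i)" by (auto simp: BS_def)
    then show ?thesis by (simp add: bar_def f_def vz prod_eq_iff)
  qed
  have init: "q_init Q (f 0)"
    unfolding q_init_def using nn by (simp add: f_def p0 vz td_init_def)
  have step: "q_step Q \<pi> 1 (f i) (f (Suc i))" if ok: "ok i" for i
  proof -
    from st ok have r: "(p i, p (Suc i)) \<in> R" by blast
    then obtain a where a: "\<pi> (p i) = Some a" "td_app Q a (p i)" "td_succ Q a (p i) (p (Suc i))"
      by (auto simp: pg_rel_def)
    have acti: "act p i = a" using a by (simp add: act_def)
    have aO: "a \<in> qO Q" using a(2) by (simp add: td_app_def)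
    have qa: "q_app Q a (f i)" using app_bar[of "f i" a] nn barf a(2) by simp
    have var: "(case qN Q a X of Some Inc \<Rightarrow> snd (f (Suc i)) X > snd (f i) X
                | Some Dec \<Rightarrow> snd (f (Suc i)) X < snd (f i) X \<and> snd (f (Suc i)) X \<ge> 0
                | None \<Rightarrow> snd (f (Suc i)) X = snd (f i) X)
           \<and> (snd (f (Suc i)) X \<noteq> snd (f i) X \<longrightarrow> \<bar>snd (f (Suc i)) X - snd (f i) X\<bar> \<ge> 1)" for X
    proof -
      have tds: "case qN Q a X of Some Inc \<Rightarrow> snd (p (Suc i)) X = False | Some Dec \<Rightarrow> True
                   | None \<Rightarrow> snd (p (Suc i)) X = snd (p i) X"
        using a(3) by (simp add: td_succ_def)
      have DK: "DD p ok X i \<le> K" using DD_le bd by blast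
      have ex: "\<exists>k. i \<le> k \<and> cnd p ok X k" using bd by blast
      show ?thesis
      proof (cases "qN Q a X")
        case None
        then have "\<not> rst p ok X i" "\<not> decpos p ok X i" by (auto simp: rst_def decpos_def acti)
        then have "DD p ok X (Suc i) = DD p ok X i" by (rule DD_same)
        moreover have "II p ok X (Suc i) = II p ok X i" using II_Suc[of p ok X i] None acti by simp
        ultimately show ?thesis using None tds by (simp add: f_def vv_def)
      next
        case (Some e) then show ?thesis
        proof (cases e)
          case Inc
          have ns: "snd (p (Suc i)) X = False" using tds Some Inc by simp
          have II1: "II p ok X (Suc i) = II p ok X i + 1" using II_Suc[of p ok X i] ok Some Inc acti by simp
          define A where "A = DD p ok X (Suc i)"
          define B where "B = DD p ok X i"
          define I where "I = II p ok X i"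
          have BK: "B \<le> K" using DK by (simp add: B_def)
          have nat: "B + 1 + (K + 2) * I + 1 \<le> A + 1 + (K + 2) * Suc I" using BK by simp
          have new: "snd (f (Suc i)) X = real (A + 1 + (K + 2) * Suc I)"
            using ns II1 by (simp add: f_def vv_def A_def I_def)
          have old: "snd (f i) X \<le> real (B + 1 + (K + 2) * I)"
            by (simp add: f_def vv_def B_def I_def)
          have "snd (f i) X + 1 \<le> snd (f (Suc i)) X"
          proof -
            have "real (B + 1 + (K + 2) * I) + 1 \<le> real (A + 1 + (K + 2) * Suc I)"
              using nat of_nat_le_iff[of "B + 1 + (K + 2) * I + 1" "A + 1 + (K + 2) * Suc I", where 'a=real]
              by (simp only: of_nat_add of_nat_1)
            then show ?thesis using new old by linarith
          qed
          then show ?thesis using Some Inc by auto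
        next
          case Dec
          have "Pos X \<in> qPre Q a" using wfa(4)[OF aO] Some Dec by simp
          then have "holds_b (p i) (Pos X)" using a(2) by (auto simp: td_app_def)
          then have pos: "\<not> snd (p i) X" by (cases "p i") simp
          have II1: "II p ok X (Suc i) = II p ok X i" using II_Suc[of p ok X i] Some Dec acti by simp
          show ?thesis
          proof (cases "snd (p (Suc i)) X")
            case True
            have "snd (f (Suc i)) X = 0" using True by (simp add: f_def vv_def)
            moreover have "snd (f i) X \<ge> 1" using pos by (simp add: f_def vv_def)
            ultimately show ?thesis using Some Dec by auto
          next
            case False
            then have "decpos p ok X i" using ok Some Dec acti by (simp add: decpos_def)
            then have "DD p ok X i = Suc (DD p ok X (Suc i))" using DD_dec ex by blast
            then have "snd (f i) X = snd (f (Suc i)) X + 1"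
              using pos False II1 by (simp add: f_def vv_def)
            moreover have "snd (f (Suc i)) X \<ge> 0" using nn by blast
            ultimately show ?thesis using Some Dec by auto
          qed
        qed
      qed
    qed
    have fs: "fst (f (Suc i)) = apply_eff (qEff Q a) (fst (f i))"
      using a(3) by (simp add: td_succ_def f_def)
    have "q_succ Q a (f i) (f (Suc i))" unfolding q_succ_def using fs var by blast
    moreover have "eps_ok 1 (snd (f i)) (snd (f (Suc i)))" unfolding eps_ok_def using var by blast
    ultimately show ?thesis unfolding q_step_def using barf a(1) qa by auto
  qed
  show ?thesis using init step barf nn by blast
qed

end


context ctx
begin

lemma walk_rtrancl:
  assumes "\<forall>i<n. (w i, w (Suc i)) \<in> Rel" "i \<le> j" "j \<le> n"
  shows "(w i, w j) \<in> Rel\<^sup>*"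
  using assms(2,3)
proof (induction j)
  case 0 then show ?case by simp
next
  case (Suc j)
  show ?case
  proof (cases "i = Suc j")
    case True then show ?thesis by simp
  next
    case False
    then have "(w i, w j) \<in> Rel\<^sup>*" using Suc by simp
    moreover have "(w j, w (Suc j)) \<in> Rel" using assms(1) Suc by simp
    ultimately show ?thesis by simp
  qed
qed

lemma path_of_rtrancl:
  assumes "(x, y) \<in> Rel\<^sup>*"
  obtains w n where "w 0 = x" "w n = y" "\<forall>i<n. (w i, w (Suc i)) \<in> Rel"
  using assms by (metis rtrancl_power relpow_fun_conv)

lemma sol_inf:
  assumes "q_init Q (f 0)" "\<forall>i. q_step Q \<pi> 1 (f i) (f (Suc i))"
  shows "\<exists>i. q_goal Q (f i)"
proof -
  have "\<forall>f :: nat \<Rightarrow> ('f,'v) qstate. q_init Q (f 0) \<and> (\<forall>i. q_step Q \<pi> 1 (f i) (f (Suc i)))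
          \<longrightarrow> (\<exists>i. q_goal Q (f i))"
    using sol[unfolded solves_def, rule_format, OF zero_less_one] by (rule conjunct1)
  then show ?thesis using assms by blast
qed

lemma sol_fin:
  assumes "q_init Q (f 0)" "\<forall>i<n. q_step Q \<pi> 1 (f i) (f (Suc i))" "\<forall>i\<le>n. \<not> q_goal Q (f i)"
  shows "\<exists>a. \<pi> (bar Q (f n)) = Some a \<and> q_app Q a (f n)"
proof -
  have "\<forall>(f :: nat \<Rightarrow> ('f,'v) qstate) n. q_init Q (f 0) \<and> (\<forall>i<n. q_step Q \<pi> 1 (f i) (f (Suc i)))
          \<and> (\<forall>i\<le>n. \<not> q_goal Q (f i))
          \<longrightarrow> (\<exists>a. \<pi> (bar Q (f n)) = Some a \<and> q_app Q a (f n))"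
    using sol[unfolded solves_def, rule_format, OF zero_less_one] by (rule conjunct2)
  then show ?thesis using assms by blast
qed

lemma appl:
  assumes bN: "b \<in> N" and ng: "\<not> td_goal Q b"
  shows "\<exists>a. \<pi> b = Some a \<and> td_app Q a b"
proof -
  from bN have "(td_init Q, b) \<in> R\<^sup>*" by (simp add: pg_nodes_def)
  then obtain pre n where pre: "pre 0 = td_init Q" "pre n = b" "\<forall>i<n. (pre i, pre (Suc i)) \<in> R"
    by (rule path_of_rtrancl)
  define p where "p i = pre (min i n)" for i
  define ok :: "nat \<Rightarrow> bool" where "ok i = (i < n)" for i
  have preN: "pre i \<in> N" if "i \<le> n" for i
    using walk_rtrancl[OF pre(3), of 0 i] that pre(1) by (simp add: pg_nodes_def)
  have p0: "p 0 = td_init Q" by (simp add: p_def pre)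
  have pN: "\<forall>i. p i \<in> N" using preN by (simp add: p_def)
  have st: "\<forall>i. ok i \<longrightarrow> (p i, p (Suc i)) \<in> R" using pre(3) by (simp add: p_def ok_def)
  have bd: "\<forall>X i. \<exists>k. i \<le> k \<and> k \<le> i + n \<and> cnd p ok X k"
  proof (intro allI)
    fix X i
    show "\<exists>k. i \<le> k \<and> k \<le> i + n \<and> cnd p ok X k"
      by (rule exI[of _ "max i n"]) (auto simp: cnd_def decpos_def ok_def)
  qed
  obtain f where f: "q_init Q (f 0)" "\<forall>i. ok i \<longrightarrow> q_step Q \<pi> 1 (f i) (f (Suc i))"
    "\<forall>i. bar Q (f i) = p i" "\<forall>i X. snd (f i) X \<ge> 0"
    using realize[OF p0 pN st bd] by blast
  have ng2: "\<forall>i\<le>n. \<not> q_goal Q (f i)"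
  proof (intro allI impI)
    fix i assume "i \<le> n"
    show "\<not> q_goal Q (f i)"
    proof (cases "i < n")
      case True
      then have "(p i, p (Suc i)) \<in> R" using st ok_def by blast
      then have "\<not> td_goal Q (p i)" by (simp add: pg_rel_def)
      then show ?thesis using goal_bar f(3,4) by simp
    next
      case False
      then have "p i = b" using \<open>i \<le> n\<close> pre(2) by (simp add: p_def)
      then show ?thesis using goal_bar f(3,4) ng by simp
    qed
  qed
  have "\<exists>a. \<pi> (bar Q (f n)) = Some a \<and> q_app Q a (f n)"
    using sol_fin[of f n] f(1,2) ng2 unfolding ok_def by blast
  moreover have "bar Q (f n) = b" using f(3) pre(2) by (simp add: p_def)
  ultimately show ?thesis using app_bar f(4) by metis
qed

definition succ0 :: "('f,'v) bstate \<Rightarrow> ('f,'v) bstate" where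
  "succ0 b = (apply_eff (qEff Q (the (\<pi> b))) (fst b),
     \<lambda>X. case qN Q (the (\<pi> b)) X of Some Inc \<Rightarrow> False | Some Dec \<Rightarrow> True | None \<Rightarrow> snd b X)"

lemma succ0_R:
  assumes "b \<in> N" "\<not> td_goal Q b"
  shows "(b, succ0 b) \<in> R"
proof -
  obtain a where a: "\<pi> b = Some a" "td_app Q a b" using appl assms by blast
  have "td_succ Q a b (succ0 b)"
    unfolding td_succ_def succ0_def using a(1)
    by (auto split: option.splits neff.splits)
  then show ?thesis using a assms by (auto simp: pg_rel_def)
qed

lemma goal_reach:
  assumes b0: "b0 \<in> N"
  shows "\<exists>g. (b0, g) \<in> R\<^sup>* \<and> td_goal Q g"
proof (rule ccontr)
  assume nog: "\<not> ?thesis"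
  from b0 have "(td_init Q, b0) \<in> R\<^sup>*" by (simp add: pg_nodes_def)
  then obtain pre P where pre: "pre 0 = td_init Q" "pre P = b0" "\<forall>i<P. (pre i, pre (Suc i)) \<in> R"
    by (rule path_of_rtrancl)
  have preN: "pre i \<in> N" if "i \<le> P" for i
    using walk_rtrancl[OF pre(3), of 0 i] that pre(1) by (simp add: pg_nodes_def)
  have reg: "(b0, (succ0 ^^ m) b0) \<in> R\<^sup>*" for m
  proof (induction m)
    case 0 then show ?case by simp
  next
    case (Suc m)
    let ?g = "(succ0 ^^ m) b0"
    have "?g \<in> N" using Suc b0 N_Rs by blast
    moreover have "\<not> td_goal Q ?g" using Suc nog by blast
    ultimately have "(?g, succ0 ?g) \<in> R" by (rule succ0_R)
    then show ?case using Suc by simp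
  qed
  define p where "p i = (if i \<le> P then pre i else (succ0 ^^ (i - P)) b0)" for i
  have pge: "p i = (succ0 ^^ (i - P)) b0" if "P \<le> i" for i
  proof (cases "i = P")
    case True then show ?thesis using pre(2) by (simp add: p_def)
  next
    case False then have "\<not> i \<le> P" using that by simp
    then show ?thesis by (simp add: p_def)
  qed
  have p0: "p 0 = td_init Q" by (simp add: p_def pre)
  have pN: "\<forall>i. p i \<in> N"
  proof
    fix i show "p i \<in> N"
    proof (cases "i \<le> P")
      case True then show ?thesis using preN by (simp add: p_def)
    next
      case False then show ?thesis using pge[of i] reg[of "i - P"] N_Rs[OF b0] by simp
    qed
  qed
  have ngp: "\<not> td_goal Q (p i)" if "P \<le> i" for i
  proof
    assume "td_goal Q (p i)"
    moreover have "(b0, p i) \<in> R\<^sup>*" using pge[OF that] reg by simp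
    ultimately show False using nog by blast
  qed
  have st: "\<forall>i. (\<lambda>_. True) i \<longrightarrow> (p i, p (Suc i)) \<in> R"
  proof (intro allI impI)
    fix i
    show "(p i, p (Suc i)) \<in> R"
    proof (cases "i < P")
      case True then show ?thesis using pre(3) by (simp add: p_def)
    next
      case False
      then have "Suc i - P = Suc (i - P)" by simp
      then have "p (Suc i) = succ0 (p i)" using pge[of i] pge[of "Suc i"] False by simp
      then show ?thesis using succ0_R pN ngp False by simp
    qed
  qed
  have bd: "\<forall>X i. \<exists>k. i \<le> k \<and> k \<le> i + P \<and> cnd p (\<lambda>_. True) X k"
  proof (intro allI)
    fix X i
    have "\<forall>j\<ge>max i P. \<not> decpos p (\<lambda>_. True) X j"
    proof (intro allI impI)
      fix j assume j: "max i P \<le> j"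
      then have "Suc j - P = Suc (j - P)" by (simp add: Suc_diff_le)
      then have "p (Suc j) = succ0 (p j)" using pge[of j] pge[of "Suc j"] j by simp
      then show "\<not> decpos p (\<lambda>_. True) X j"
        unfolding decpos_def act_def by (simp add: succ0_def)
    qed
    then show "\<exists>k. i \<le> k \<and> k \<le> i + P \<and> cnd p (\<lambda>_. True) X k"
      by (intro exI[of _ "max i P"]) (auto simp: cnd_def)
  qed
  obtain f where f: "q_init Q (f 0)" "\<forall>i. q_step Q \<pi> 1 (f i) (f (Suc i))"
    "\<forall>i. bar Q (f i) = p i" "\<forall>i X. snd (f i) X \<ge> 0"
    using realize[OF p0 pN st bd] by blast
  have "\<exists>i. q_goal Q (f i)" using sol_inf f(1,2) by blast
  then obtain i where "q_goal Q (f i)" by blast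
  then have "td_goal Q (p i)" using goal_bar f(3,4) by metis
  moreover have "(p i, p (Suc i)) \<in> R" using st by blast
  ultimately show False by (simp add: pg_rel_def)
qed

end


lemma mod_window:
  fixes L :: nat
  assumes "t < L"
  shows "\<exists>k. m \<le> k \<and> k < m + L \<and> k mod L = t"
proof -
  define r where "r = m mod L"
  define q where "q = m div L"
  have m: "m = q * L + r" unfolding q_def r_def by simp
  have rL: "r < L" using assms unfolding r_def by simp
  show ?thesis
  proof (cases "r \<le> t")
    case True
    have "(q * L + t) mod L = t" using assms by simp
    moreover have "m \<le> q * L + t" "q * L + t < m + L" using m True assms by linarith+
    ultimately show ?thesis by blast
  next
    case False
    have "(Suc q * L + t) mod L = t" using assms by (metis mod_less mod_mult_self3)
    moreover have "m \<le> Suc q * L + t" "Suc q * L + t < m + L" using m False rL by simp_all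
    ultimately show ?thesis by blast
  qed
qed

lemma walk_cat:
  assumes "w1 0 = x" "w1 n1 = y" "\<forall>i<n1. (w1 i, w1 (Suc i)) \<in> Rel"
    "w2 0 = y" "w2 n2 = z" "\<forall>i<n2. (w2 i, w2 (Suc i)) \<in> Rel"
  shows "\<exists>w. w 0 = x \<and> w (n1 + n2) = z \<and> (\<forall>i<n1 + n2. (w i, w (Suc i)) \<in> Rel)
           \<and> w1 ` {..n1} \<union> w2 ` {..n2} \<subseteq> w ` {..n1 + n2}"
proof -
  define w where "w i = (if i \<le> n1 then w1 i else w2 (i - n1))" for i
  have "w 0 = x" using assms by (simp add: w_def)
  moreover have "w (n1 + n2) = z" using assms by (cases "n2 = 0") (auto simp: w_def)
  moreover have "\<forall>i<n1 + n2. (w i, w (Suc i)) \<in> Rel"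
  proof (intro allI impI)
    fix i assume i: "i < n1 + n2"
    show "(w i, w (Suc i)) \<in> Rel"
    proof (cases "i < n1")
      case True then show ?thesis using assms(3) by (simp add: w_def)
    next
      case False
      then have "w i = w2 (i - n1)" using assms(2,4) by (cases "i = n1") (auto simp: w_def)
      moreover have "w (Suc i) = w2 (Suc (i - n1))" using False by (simp add: w_def Suc_diff_le)
      moreover have "i - n1 < n2" using i False by simp
      ultimately show ?thesis using assms(6) by simp
    qed
  qed
  moreover have "w1 ` {..n1} \<union> w2 ` {..n2} \<subseteq> w ` {..n1 + n2}"
  proof
    fix y' assume "y' \<in> w1 ` {..n1} \<union> w2 ` {..n2}"
    then show "y' \<in> w ` {..n1 + n2}"
    proof
      assume "y' \<in> w1 ` {..n1}"
      then obtain j where "j \<le> n1" "y' = w1 j" by auto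
      then have "y' = w j" by (simp add: w_def)
      then show ?thesis using \<open>j \<le> n1\<close> by auto
    next
      assume "y' \<in> w2 ` {..n2}"
      then obtain j where j: "j \<le> n2" "y' = w2 j" by auto
      show ?thesis
      proof (cases "j = 0")
        case True
        then have "y' = w n1" using j assms(2,4) by (simp add: w_def)
        then show ?thesis by auto
      next
        case False
        then have "y' = w (n1 + j)" using j by (simp add: w_def)
        then show ?thesis using j by auto
      qed
    qed
  qed
  ultimately show ?thesis by blast
qed

lemma cover_walk:
  assumes "finite S" "\<forall>s\<in>S. (b, s) \<in> Rel\<^sup>* \<and> (s, b) \<in> Rel\<^sup>*" "(b, b) \<in> Rel\<^sup>+"
  shows "\<exists>w L. 0 < L \<and> w 0 = b \<and> w L = b \<and> (\<forall>i<L. (w i, w (Suc i)) \<in> Rel) \<and> S \<subseteq> w ` {..L}"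
  using assms
proof (induction S rule: finite_induct)
  case empty
  obtain n where "0 < n" "(b, b) \<in> Rel ^^ n" using empty(2) trancl_power by blast
  then show ?case by (auto simp: relpow_fun_conv)
next
  case (insert s S)
  then obtain w L where w: "0 < L" "w 0 = b" "w L = b" "\<forall>i<L. (w i, w (Suc i)) \<in> Rel" "S \<subseteq> w ` {..L}"
    by blast
  have "(b, s) \<in> Rel\<^sup>*" "(s, b) \<in> Rel\<^sup>*" using insert by auto
  then obtain w1 n1 w2 n2 where p1: "w1 0 = b" "w1 n1 = s" "\<forall>i<n1. (w1 i, w1 (Suc i)) \<in> Rel"
    and p2: "w2 0 = s" "w2 n2 = b" "\<forall>i<n2. (w2 i, w2 (Suc i)) \<in> Rel"
    by (metis rtrancl_power relpow_fun_conv)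
  obtain w' where w': "w' 0 = b" "w' (L + n1) = s" "\<forall>i<L + n1. (w' i, w' (Suc i)) \<in> Rel"
    "w ` {..L} \<union> w1 ` {..n1} \<subseteq> w' ` {..L + n1}"
    using walk_cat[OF w(2,3,4) p1] by blast
  obtain w'' where w'': "w'' 0 = b" "w'' (L + n1 + n2) = b" "\<forall>i<L + n1 + n2. (w'' i, w'' (Suc i)) \<in> Rel"
    "w' ` {..L + n1} \<union> w2 ` {..n2} \<subseteq> w'' ` {..L + n1 + n2}"
    using walk_cat[OF w'(1,2,3) p2] by blast
  have "s \<in> w1 ` {..n1}" using p1 by auto
  then have "insert s S \<subseteq> w'' ` {..L + n1 + n2}" using w(5) w'(4) w''(4) by blast
  then show ?case using w'' w(1) by (intro exI[of _ w''] exI[of _ "L + n1 + n2"]) auto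
qed

context ctx
begin

abbreviation "len \<equiv> length run"
abbreviation "Ek \<equiv> sieve_edges Q \<pi> run"
abbreviation "CC k \<equiv> fst (run ! k)"
abbreviation "XX k \<equiv> snd (run ! k)"

definition scc_of :: "(('f,'v) bstate \<times> ('f,'v) bstate) set \<Rightarrow> ('f,'v) bstate \<Rightarrow> ('f,'v) bstate set" where
  "scc_of Rel b = {b' \<in> N. (b, b') \<in> Rel\<^sup>* \<and> (b', b) \<in> Rel\<^sup>*}"

lemma choice: "k < len \<Longrightarrow> sieve_choice Q \<pi> run k (CC k) (XX k)"
  using sr by (simp add: sieve_run_def)

lemma noch: "\<not> sieve_choice Q \<pi> run len C X"
  using sr by (simp add: sieve_run_def)

lemma Ek_sub: "Ek k \<subseteq> E" by (auto simp: sieve_edges_def)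

lemma Ek_anti: "k \<le> k' \<Longrightarrow> Ek k' \<subseteq> Ek k"
  by (auto simp: sieve_edges_def)

lemma Ek0: "Ek 0 = E" by (simp add: sieve_edges_def)

lemma Ek_Suc: "Ek (Suc k) = Ek k - {(b, b'). b \<in> CC k \<and> b' \<in> CC k \<and> is_dec Q \<pi> b (XX k)}"
  by (auto simp: sieve_edges_def less_Suc_eq)

lemma Ek_nodec: "(u, v) \<in> Ek k \<Longrightarrow> j < k \<Longrightarrow> u \<in> CC j \<Longrightarrow> v \<in> CC j \<Longrightarrow> \<not> is_dec Q \<pi> u (XX j)"
  by (auto simp: sieve_edges_def)

lemma scc_eq: "is_scc N Rel C \<Longrightarrow> b \<in> C \<Longrightarrow> C = scc_of Rel b"
  unfolding is_scc_def scc_of_def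
  by (auto intro: rtrancl_trans)

lemma CC_scc: "k < len \<Longrightarrow> b \<in> CC k \<Longrightarrow> CC k = scc_of (Ek k) b"
  using choice scc_eq by (auto simp: sieve_choice_def)

lemma scc_of_mono: "Rel \<subseteq> Rel' \<Longrightarrow> scc_of Rel b \<subseteq> scc_of Rel' b"
  unfolding scc_of_def using rtrancl_mono by blast

lemma CC_nest: "j \<le> k \<Longrightarrow> k < len \<Longrightarrow> b \<in> CC j \<Longrightarrow> b \<in> CC k \<Longrightarrow> CC k \<subseteq> CC j"
  using CC_scc[of k b] CC_scc[of j b] scc_of_mono[OF Ek_anti[of j k]] by simp

lemma XX_V: "k < len \<Longrightarrow> XX k \<in> qV Q"
proof -
  assume k: "k < len"
  have "\<exists>b\<in>CC k. is_dec Q \<pi> b (XX k)" using choice[OF k] unfolding sieve_choice_def by blast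
  then obtain b where "is_dec Q \<pi> b (XX k)" by blast
  then obtain a where "\<pi> b = Some a" "qN Q a (XX k) = Some Dec" by (auto simp: is_dec_def)
  then show ?thesis using wfa(3)[OF pol_O] by blast
qed

lemma set_filter_run: "set (map snd (filter (\<lambda>(C, X). b \<in> C) run)) = {XX k | k. k < len \<and> b \<in> CC k}"
proof
  show "set (map snd (filter (\<lambda>(C, X). b \<in> C) run)) \<subseteq> {XX k | k. k < len \<and> b \<in> CC k}"
  proof
    fix y assume "y \<in> set (map snd (filter (\<lambda>(C, X). b \<in> C) run))"
    then obtain x where x: "x \<in> set run" "b \<in> fst x" "y = snd x" by auto
    then obtain k where "k < len" "run ! k = x" by (auto simp: in_set_conv_nth)
    then show "y \<in> {XX k | k. k < len \<and> b \<in> CC k}" using x by auto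
  qed
next
  show "{XX k | k. k < len \<and> b \<in> CC k} \<subseteq> set (map snd (filter (\<lambda>(C, X). b \<in> C) run))"
  proof
    fix y assume "y \<in> {XX k | k. k < len \<and> b \<in> CC k}"
    then obtain k where k: "k < len" "b \<in> CC k" "y = XX k" by auto
    then have "run ! k \<in> set (filter (\<lambda>(C, X). b \<in> C) run)"
      using nth_mem[of k run] by (cases "run ! k") auto
    then show "y \<in> set (map snd (filter (\<lambda>(C, X). b \<in> C) run))" using k by auto
  qed
qed

lemma stack_set: "set (stack run b) = {XX k | k. k < len \<and> b \<in> CC k}"
  unfolding stack_def by (rule set_filter_run)

lemma stack_V: "set (stack run b) \<subseteq> qV Q"
  using stack_set XX_V by auto

lemma distinct_map_filter:
  assumes "\<forall>i j. i < j \<and> j < length xs \<and> P (xs ! i) \<and> P (xs ! j) \<longrightarrow> f (xs ! i) \<noteq> f (xs ! j)"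
  shows "distinct (map f (filter P xs))"
  using assms
proof (induction xs)
  case Nil then show ?case by simp
next
  case (Cons x xs)
  have "\<forall>i j. i < j \<and> j < length xs \<and> P (xs ! i) \<and> P (xs ! j) \<longrightarrow> f (xs ! i) \<noteq> f (xs ! j)"
  proof (intro allI impI)
    fix i j assume h: "i < j \<and> j < length xs \<and> P (xs ! i) \<and> P (xs ! j)"
    then show "f (xs ! i) \<noteq> f (xs ! j)" using Cons.prems[rule_format, of "Suc i" "Suc j"] by simp
  qed
  then have IH: "distinct (map f (filter P xs))" by (rule Cons.IH)
  have "P x \<Longrightarrow> f x \<notin> f ` set (filter P xs)"
  proof
    assume Px: "P x" and "f x \<in> f ` set (filter P xs)"
    then obtain y where y: "y \<in> set xs" "P y" "f y = f x" by auto
    then obtain j where "j < length xs" "xs ! j = y" by (auto simp: in_set_conv_nth)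
    then show False using Cons.prems[rule_format, of 0 "Suc j"] Px y by auto
  qed
  then show ?case using IH by auto
qed

lemma stack_distinct: "distinct (stack run b)"
  unfolding stack_def
proof (rule distinct_map_filter, intro allI impI)
  fix i j assume h: "i < j \<and> j < len \<and> (\<lambda>(C, X). b \<in> C) (run ! i) \<and> (\<lambda>(C, X). b \<in> C) (run ! j)"
  then have bi: "b \<in> CC i" and bj: "b \<in> CC j" by (auto split: prod.splits)
  have "CC j \<subseteq> CC i" using CC_nest[of i j b] h bi bj by simp
  then show "snd (run ! i) \<noteq> snd (run ! j)"
    using choice[of j] h by (auto simp: sieve_choice_def)
qed

lemma stack_noinc: "Y \<in> set (stack run b) \<Longrightarrow> \<not> is_inc Q \<pi> b Y"
proof -
  assume "Y \<in> set (stack run b)"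
  then obtain k where k: "k < len" "b \<in> CC k" "Y = XX k" using stack_set by auto
  then show ?thesis using choice[OF k(1)] unfolding sieve_choice_def by blast
qed

lemma stack_in: "k < len \<Longrightarrow> b \<in> CC k \<Longrightarrow> XX k \<in> set (stack run b)"
  using stack_set by auto

definition pstk where
  "pstk k b = map snd (filter (\<lambda>(C, X). b \<in> C) (take (Suc k) run))"

lemma stack_split: "\<exists>rest. stack run b = pstk k b @ rest"
  unfolding stack_def pstk_def
  by (metis append_take_drop_id filter_append map_append)

lemma pstk_eq:
  assumes "\<forall>j\<le>k. j < len \<longrightarrow> (b \<in> CC j \<longleftrightarrow> b' \<in> CC j)"
  shows "pstk k b = pstk k b'"
proof -
  have "filter (\<lambda>(C, X). b \<in> C) (take (Suc k) run) = filter (\<lambda>(C, X). b' \<in> C) (take (Suc k) run)"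
  proof (rule filter_cong[OF refl])
    fix x assume "x \<in> set (take (Suc k) run)"
    then obtain j where "j < length (take (Suc k) run)" "take (Suc k) run ! j = x"
      by (auto simp: in_set_conv_nth)
    then have "j \<le> k" "j < len" "x = run ! j" by auto
    then show "(\<lambda>(C, X). b \<in> C) x = (\<lambda>(C, X). b' \<in> C) x"
      using assms by (auto split: prod.splits)
  qed
  then show ?thesis by (simp add: pstk_def)
qed

lemma pstk_last: "k < len \<Longrightarrow> b \<in> CC k \<Longrightarrow> \<exists>ys. pstk k b = ys @ [XX k]"
  unfolding pstk_def
  by (cases "run ! k") (simp add: take_Suc_conv_app_nth)

end


context ctx
begin

lemma EkR: "(x, y) \<in> Ek k \<Longrightarrow> (x, y) \<in> R \<and> x \<in> N \<and> y \<in> N"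
  using Ek_sub E_N by blast

lemma Ek_rtrancl_N: "(x, y) \<in> (Ek k)\<^sup>* \<Longrightarrow> x \<in> N \<Longrightarrow> y \<in> N"
  by (induction rule: rtrancl_induct) (auto dest: EkR)

lemma acyc:
  assumes bN: "b \<in> N"
  shows "(b, b) \<notin> (Ek len)\<^sup>+"
proof
  assume cyc: "(b, b) \<in> (Ek len)\<^sup>+"
  define S where "S = scc_of (Ek len) b"
  have SN: "S \<subseteq> N" by (auto simp: S_def scc_of_def)
  have finS: "finite S" using SN finN finite_subset by blast
  have iss: "is_scc N (Ek len) S" unfolding is_scc_def S_def scc_of_def using bN by blast
  have Smem: "\<forall>s\<in>S. (b, s) \<in> (Ek len)\<^sup>* \<and> (s, b) \<in> (Ek len)\<^sup>*" by (auto simp: S_def scc_of_def)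
  have out: "\<exists>v\<in>S. (u, v) \<in> Ek len" if u: "u \<in> S" for u
  proof -
    have ub: "(u, b) \<in> (Ek len)\<^sup>*" and bu: "(b, u) \<in> (Ek len)\<^sup>*" using u Smem by auto
    have "(u, b) \<in> (Ek len)\<^sup>+" using ub cyc by (rule rtrancl_trancl_trancl)
    then have "(u, u) \<in> (Ek len)\<^sup>+" using bu by (rule trancl_rtrancl_trancl)
    then obtain v where v: "(u, v) \<in> Ek len" "(v, u) \<in> (Ek len)\<^sup>*" by (meson tranclD)
    have "v \<in> N" using v EkR by blast
    moreover have "(b, v) \<in> (Ek len)\<^sup>*" using bu v(1) by (rule rtrancl_into_rtrancl)
    moreover have "(v, b) \<in> (Ek len)\<^sup>*" using v(2) ub by (rule rtrancl_trans)
    ultimately have "v \<in> S" by (simp add: S_def scc_of_def)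
    then show ?thesis using v(1) by blast
  qed
  have incs: "\<exists>s\<in>S. is_inc Q \<pi> s X" if u: "u \<in> S" and d: "is_dec Q \<pi> u X" for u X
  proof (rule ccontr)
    assume no: "\<not> (\<exists>s\<in>S. is_inc Q \<pi> s X)"
    have "\<not> sieve_choice Q \<pi> run len S X" by (rule noch)
    then obtain j where j: "j < len" "S \<subseteq> CC j" "XX j = X"
      using iss u d no unfolding sieve_choice_def by blast
    obtain v where v: "v \<in> S" "(u, v) \<in> Ek len" using out u by blast
    have "\<not> is_dec Q \<pi> u (XX j)" using Ek_nodec[OF v(2) j(1)] j(2) u v(1) by blast
    then show False using d j(3) by simp
  qed
  obtain w L where w: "0 < L" "w 0 = b" "w L = b" "\<forall>i<L. (w i, w (Suc i)) \<in> Ek len" "S \<subseteq> w ` {..L}"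
    using cover_walk[OF finS Smem cyc] by blast
  have wS: "w j \<in> S" if "j \<le> L" for j
  proof -
    have "(b, w j) \<in> (Ek len)\<^sup>*" using walk_rtrancl[OF w(4), of 0 j] that w(2) by simp
    moreover have "(w j, b) \<in> (Ek len)\<^sup>*" using walk_rtrancl[OF w(4), of j L] that w(3) by simp
    moreover have "w j \<in> N" using calculation(1) bN Ek_rtrancl_N by blast
    ultimately show ?thesis by (simp add: S_def scc_of_def)
  qed
  from bN have "(td_init Q, b) \<in> R\<^sup>*" by (simp add: pg_nodes_def)
  then obtain pre P where pre: "pre 0 = td_init Q" "pre P = b" "\<forall>i<P. (pre i, pre (Suc i)) \<in> R"
    by (rule path_of_rtrancl)
  have preN: "pre i \<in> N" if "i \<le> P" for i
    using walk_rtrancl[OF pre(3), of 0 i] that pre(1) by (simp add: pg_nodes_def)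
  define p where "p i = (if i \<le> P then pre i else w ((i - P) mod L))" for i
  have pge: "p i = w ((i - P) mod L)" if "P \<le> i" for i
  proof (cases "i = P")
    case True then show ?thesis using pre(2) w(2) by (simp add: p_def)
  next
    case False then have "\<not> i \<le> P" using that by simp
    then show ?thesis by (simp add: p_def)
  qed
  have pS: "p i \<in> S" if "P \<le> i" for i
    using pge[OF that] wS w(1) by (simp add: order_less_imp_le)
  have p0: "p 0 = td_init Q" by (simp add: p_def pre)
  have pN: "\<forall>i. p i \<in> N"
  proof
    fix i show "p i \<in> N"
    proof (cases "i \<le> P")
      case True then show ?thesis using preN by (simp add: p_def)
    next
      case False then show ?thesis using pS[of i] SN by auto
    qed
  qed
  have st: "\<forall>i. (\<lambda>_. True) i \<longrightarrow> (p i, p (Suc i)) \<in> R"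
  proof (intro allI impI)
    fix i
    show "(p i, p (Suc i)) \<in> R"
    proof (cases "i < P")
      case True then show ?thesis using pre(3) by (simp add: p_def)
    next
      case False
      define t where "t = (i - P) mod L"
      have tL: "t < L" using w(1) by (simp add: t_def)
      have "Suc i - P = Suc (i - P)" using False by (simp add: Suc_diff_le)
      then have ps: "p (Suc i) = w (if Suc t = L then 0 else Suc t)"
        using pge[of "Suc i"] False by (simp add: mod_Suc t_def)
      have "(w t, w (Suc t)) \<in> Ek len" using w(4) tL by simp
      then have "(p i, p (Suc i)) \<in> Ek len"
        using ps pge[of i] False w(2,3) by (auto simp: t_def)
      then show ?thesis using EkR by blast
    qed
  qed
  have actS: "\<exists>a. \<pi> (p j) = Some a \<and> act p j = a" for j
  proof -
    have "(p j, p (Suc j)) \<in> R" using st by blast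
    then obtain a where "\<pi> (p j) = Some a" by (auto simp: pg_rel_def)
    then show ?thesis by (simp add: act_def)
  qed
  have bd: "\<forall>X i. \<exists>k. i \<le> k \<and> k \<le> i + (P + L) \<and> cnd p (\<lambda>_. True) X k"
  proof (intro allI)
    fix X i
    show "\<exists>k. i \<le> k \<and> k \<le> i + (P + L) \<and> cnd p (\<lambda>_. True) X k"
    proof (cases "\<exists>u\<in>S. is_dec Q \<pi> u X")
      case True
      then obtain s where s: "s \<in> S" "is_inc Q \<pi> s X" using incs by blast
      then obtain t0 where t0: "t0 \<le> L" "s = w t0" using w(5) by blast
      define t1 where "t1 = (if t0 = L then 0 else t0)"
      have t1: "t1 < L" "s = w t1" using t0 w(1,2,3) by (auto simp: t1_def)
      obtain k' where k': "max i P - P \<le> k'" "k' < max i P - P + L" "k' mod L = t1"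
        using mod_window[OF t1(1)] by blast
      define k where "k = k' + P"
      have pk: "p k = s" using pge[of k] k' t1 by (simp add: k_def)
      obtain a where a: "\<pi> s = Some a" "qN Q a X = Some Inc" using s(2) by (auto simp: is_inc_def)
      have "rst p (\<lambda>_. True) X k" using actS[of k] pk a by (auto simp: rst_def)
      moreover have "i \<le> k" "k \<le> i + (P + L)" using k' by (auto simp: k_def)
      ultimately show ?thesis by (auto simp: cnd_def)
    next
      case False
      have "\<forall>j\<ge>max i P. \<not> decpos p (\<lambda>_. True) X j"
      proof (intro allI impI notI)
        fix j assume j: "max i P \<le> j" and dp: "decpos p (\<lambda>_. True) X j"
        obtain a where a: "\<pi> (p j) = Some a" "act p j = a" using actS by blast
        have "is_dec Q \<pi> (p j) X" using dp a by (auto simp: decpos_def is_dec_def)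
        moreover have "p j \<in> S" using pS j by simp
        ultimately show False using False by blast
      qed
      then show ?thesis by (intro exI[of _ "max i P"]) (auto simp: cnd_def)
    qed
  qed
  obtain f where f: "q_init Q (f 0)" "\<forall>i. q_step Q \<pi> 1 (f i) (f (Suc i))"
    "\<forall>i. bar Q (f i) = p i" "\<forall>i X. snd (f i) X \<ge> 0"
    using realize[OF p0 pN st bd] by blast
  have "\<exists>i. q_goal Q (f i)" using sol_inf f(1,2) by blast
  then obtain i where "q_goal Q (f i)" by blast
  then have "td_goal Q (p i)" using goal_bar f(3,4) by metis
  moreover have "(p i, p (Suc i)) \<in> R" using st by blast
  ultimately show False by (simp add: pg_rel_def)
qed

lemma dec_in_stack:
  assumes bN: "b \<in> N" and a: "\<pi> b = Some a" and d: "qN Q a X = Some Dec"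
  shows "\<exists>Y\<in>set (stack run b). qN Q a Y = Some Dec"
proof (rule ccontr)
  assume no: "\<not> ?thesis"
  define S where "S = scc_of (Ek len) b"
  have iss: "is_scc N (Ek len) S" unfolding is_scc_def S_def scc_of_def using bN by blast
  have Sb: "S = {b}"
  proof
    show "S \<subseteq> {b}"
    proof
      fix b' assume "b' \<in> S"
      then have h: "(b, b') \<in> (Ek len)\<^sup>*" "(b', b) \<in> (Ek len)\<^sup>*" by (auto simp: S_def scc_of_def)
      show "b' \<in> {b}"
      proof (rule ccontr)
        assume "b' \<notin> {b}"
        then have "(b, b') \<in> (Ek len)\<^sup>+" using h(1) by (auto simp: rtrancl_eq_or_trancl)
        then have "(b, b) \<in> (Ek len)\<^sup>+" using h(2) by (rule trancl_rtrancl_trancl)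
        then show False using acyc bN by blast
      qed
    qed
  next
    show "{b} \<subseteq> S" using bN by (simp add: S_def scc_of_def)
  qed
  have "sieve_choice Q \<pi> run len S X"
    unfolding sieve_choice_def
  proof (intro conjI)
    show "is_scc N (Ek len) S" by (rule iss)
    show "\<exists>b\<in>S. is_dec Q \<pi> b X" using Sb a d by (simp add: is_dec_def)
    show "\<forall>b\<in>S. \<not> is_inc Q \<pi> b X" using Sb a d by (simp add: is_inc_def)
    show "\<forall>j<len. S \<subseteq> CC j \<longrightarrow> XX j \<noteq> X"
    proof (intro allI impI)
      fix j assume j: "j < len" "S \<subseteq> CC j"
      then have "XX j \<in> set (stack run b)" using Sb stack_in by simp
      then show "XX j \<noteq> X" using no d by blast
    qed
  qed
  then show False using noch by blast
qed

definition Gam :: "'v list \<Rightarrow> (('f,'v) bstate \<times> ('f,'v) bstate) set" where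
  "Gam \<beta> = {(u, v) \<in> E. prefix \<beta> (stack run u) \<and> (\<forall>Y\<in>set \<beta>. \<not> is_dec Q \<pi> u Y)}"

lemma Gam_E: "Gam \<beta> \<subseteq> E" by (auto simp: Gam_def)

lemma KL:
  assumes uv: "(u, v) \<in> Gam \<beta>" and vu: "(v, u) \<in> (Gam \<beta>)\<^sup>*"
    and pu: "prefix (\<beta> @ [X]) (stack run u)"
  shows "prefix (\<beta> @ [X]) (stack run v)"
proof -
  let ?G = "Gam \<beta>"
  define cyc where "cyc = {x. (u, x) \<in> ?G\<^sup>* \<and> (x, u) \<in> ?G\<^sup>*}"
  define Ec where "Ec = {(x, y) \<in> ?G. x \<in> cyc \<and> y \<in> cyc}"
  have toc: "(x, u) \<in> ?G\<^sup>* \<longrightarrow> (u, x) \<in> Ec\<^sup>*" if "(u, x) \<in> ?G\<^sup>*" for x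
    using that
  proof (induction rule: rtrancl_induct)
    case base then show ?case by simp
  next
    case (step y z)
    show ?case
    proof
      assume zu: "(z, u) \<in> ?G\<^sup>*"
      have yu: "(y, u) \<in> ?G\<^sup>*" using step(2) zu by (rule converse_rtrancl_into_rtrancl)
      have "(u, y) \<in> Ec\<^sup>*" using step(3) yu by blast
      moreover have "(y, z) \<in> Ec"
        using step(1,2) yu zu by (auto simp: Ec_def cyc_def)
      ultimately show "(u, z) \<in> Ec\<^sup>*" by simp
    qed
  qed
  have fromc: "(u, x) \<in> ?G\<^sup>* \<longrightarrow> (x, u) \<in> Ec\<^sup>*" if "(x, u) \<in> ?G\<^sup>*" for x
    using that
  proof (induction rule: converse_rtrancl_induct)
    case base then show ?case by simp
  next
    case (step y z)
    show ?case
    proof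
      assume uy: "(u, y) \<in> ?G\<^sup>*"
      have uz: "(u, z) \<in> ?G\<^sup>*" using uy step(1) by (rule rtrancl_into_rtrancl)
      have "(z, u) \<in> Ec\<^sup>*" using step(3) uz by blast
      moreover have "(y, z) \<in> Ec"
        using step(1,2) uy uz by (auto simp: Ec_def cyc_def)
      ultimately show "(y, u) \<in> Ec\<^sup>*" by (metis converse_rtrancl_into_rtrancl)
    qed
  qed
  have uN: "u \<in> N" using uv Gam_E E_N by blast
  have uvG: "(u, v) \<in> ?G\<^sup>*" using uv by simp
  have "(u, v) \<in> Ec" using uv uvG vu by (auto simp: Ec_def cyc_def)
  moreover have "(v, u) \<in> Ec\<^sup>*" using fromc vu uvG by blast
  ultimately have uu: "(u, u) \<in> Ec\<^sup>+" by (rule rtrancl_into_trancl2)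
  have EcE: "Ec \<subseteq> E" using Gam_E by (auto simp: Ec_def)
  have notall: "\<not> Ec \<subseteq> Ek len"
  proof
    assume "Ec \<subseteq> Ek len"
    then have "(u, u) \<in> (Ek len)\<^sup>+" using uu trancl_mono by blast
    then show False using acyc uN by blast
  qed
  define k0 where "k0 = (LEAST k. \<not> Ec \<subseteq> Ek k)"
  have k0: "\<not> Ec \<subseteq> Ek k0" unfolding k0_def using notall by (rule LeastI)
  have k0len: "k0 \<le> len" unfolding k0_def using notall by (rule Least_le)
  have "k0 \<noteq> 0" using k0 EcE Ek0 by auto
  then obtain k where kk: "k0 = Suc k" by (cases k0) auto
  have Eck: "Ec \<subseteq> Ek k" using not_less_Least[of k "\<lambda>k. \<not> Ec \<subseteq> Ek k"] kk k0_def by auto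
  have klen: "k < len" using k0len kk by simp
  obtain w w' where ww: "(w, w') \<in> Ec" "(w, w') \<notin> Ek (Suc k)" using k0 kk by auto
  have "(w, w') \<in> Ek k" using ww Eck by auto
  then have wC: "w \<in> CC k" "w' \<in> CC k" "is_dec Q \<pi> w (XX k)" using ww(2) Ek_Suc by auto
  have wcyc: "w \<in> cyc" using ww by (auto simp: Ec_def)
  have cycN: "x \<in> N" if "x \<in> cyc" for x
  proof -
    have "(u, x) \<in> ?G\<^sup>*" using that by (simp add: cyc_def)
    moreover have "E \<subseteq> R" by (auto simp: pg_edges_def)
    then have "?G \<subseteq> R" using Gam_E by blast
    ultimately have "(u, x) \<in> R\<^sup>*" using rtrancl_mono[of ?G R] by blast
    then show ?thesis using uN N_Rs by blast
  qed
  have mut: "(w, x) \<in> (Ek j)\<^sup>* \<and> (x, w) \<in> (Ek j)\<^sup>*" if "j \<le> k" "x \<in> cyc" for j x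
  proof -
    have sub: "Ec \<subseteq> Ek j" using Eck Ek_anti[OF that(1)] by blast
    have "(w, u) \<in> Ec\<^sup>*" "(u, w) \<in> Ec\<^sup>*" using wcyc fromc toc by (auto simp: cyc_def)
    moreover have "(x, u) \<in> Ec\<^sup>*" "(u, x) \<in> Ec\<^sup>*" using that(2) fromc toc by (auto simp: cyc_def)
    ultimately have "(w, x) \<in> Ec\<^sup>*" "(x, w) \<in> Ec\<^sup>*" by (meson rtrancl_trans)+
    then show ?thesis using rtrancl_mono[OF sub] by blast
  qed
  have memb: "x \<in> CC j \<longleftrightarrow> w \<in> CC j" if "j \<le> k" "x \<in> cyc" for j x
  proof
    assume "x \<in> CC j"
    then have "CC j = scc_of (Ek j) x" using CC_scc that klen by simp
    then show "w \<in> CC j" using mut[OF that] cycN wcyc by (simp add: scc_of_def)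
  next
    assume "w \<in> CC j"
    then have "CC j = scc_of (Ek j) w" using CC_scc that klen by simp
    then show "x \<in> CC j" using mut[OF that] cycN that(2) by (simp add: scc_of_def)
  qed
  have ucyc: "u \<in> cyc" by (simp add: cyc_def)
  have vcyc: "v \<in> cyc" using uvG vu by (simp add: cyc_def)
  have pu_eq: "pstk k u = pstk k w" using memb ucyc by (intro pstk_eq) auto
  have pv_eq: "pstk k v = pstk k w" using memb vcyc by (intro pstk_eq) auto
  obtain ys where ys: "pstk k w = ys @ [XX k]" using pstk_last[OF klen wC(1)] by blast
  have wG: "(w, w') \<in> ?G" using ww by (simp add: Ec_def)
  then have nb: "XX k \<notin> set \<beta>" using wC(3) by (auto simp: Gam_def)
  have bw: "prefix \<beta> (stack run w)" using wG by (simp add: Gam_def)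
  obtain rw where rw: "stack run w = pstk k w @ rw" using stack_split by blast
  have lt: "length \<beta> < length (pstk k w)"
  proof (rule ccontr)
    assume "\<not> ?thesis"
    then have "prefix (pstk k w) \<beta>" using prefix_length_prefix[of "pstk k w" "stack run w" \<beta>] bw rw by simp
    then have "XX k \<in> set \<beta>" using ys set_mono_prefix by fastforce
    then show False using nb by simp
  qed
  obtain ru where ru: "stack run u = pstk k u @ ru" using stack_split by blast
  have "prefix (\<beta> @ [X]) (pstk k u)"
    using prefix_length_prefix[of "\<beta> @ [X]" "stack run u" "pstk k u"] pu ru lt pu_eq by simp
  then have "prefix (\<beta> @ [X]) (pstk k v)" using pu_eq pv_eq by simp
  moreover obtain rv where "stack run v = pstk k v @ rv" using stack_split by blast
  ultimately show ?thesis by simp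
qed

end


context ctx
begin

definition rank :: "'v list \<Rightarrow> ('f,'v) bstate \<Rightarrow> nat" where
  "rank \<beta> b = card {w \<in> N. (w, b) \<in> (Gam \<beta>)\<^sup>*}"

lemma rank_le: "rank \<beta> b \<le> card N"
  unfolding rank_def using finN by (intro card_mono) auto

lemma rank_pos: "b \<in> N \<Longrightarrow> 1 \<le> rank \<beta> b"
proof -
  assume "b \<in> N"
  then have "b \<in> {w \<in> N. (w, b) \<in> (Gam \<beta>)\<^sup>*}" by simp
  moreover have "finite {w \<in> N. (w, b) \<in> (Gam \<beta>)\<^sup>*}" using finN by simp
  ultimately have "card {w \<in> N. (w, b) \<in> (Gam \<beta>)\<^sup>*} > 0" using card_gt_0_iff by blast
  then show ?thesis unfolding rank_def by simp
qed

lemma rank_sub: "(u, v) \<in> Gam \<beta> \<Longrightarrow> {w \<in> N. (w, u) \<in> (Gam \<beta>)\<^sup>*} \<subseteq> {w \<in> N. (w, v) \<in> (Gam \<beta>)\<^sup>*}"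
proof
  fix w assume uv: "(u, v) \<in> Gam \<beta>" and "w \<in> {w \<in> N. (w, u) \<in> (Gam \<beta>)\<^sup>*}"
  then have "w \<in> N" "(w, u) \<in> (Gam \<beta>)\<^sup>*" by auto
  moreover have "(w, v) \<in> (Gam \<beta>)\<^sup>*" using calculation(2) uv by (rule rtrancl_into_rtrancl)
  ultimately show "w \<in> {w \<in> N. (w, v) \<in> (Gam \<beta>)\<^sup>*}" by simp
qed

lemma rank_mono: "(u, v) \<in> Gam \<beta> \<Longrightarrow> rank \<beta> u \<le> rank \<beta> v"
  unfolding rank_def using finN rank_sub by (intro card_mono) auto

lemma rank_strict:
  assumes "(u, v) \<in> Gam \<beta>" "v \<in> N" "(v, u) \<notin> (Gam \<beta>)\<^sup>*"
  shows "rank \<beta> u < rank \<beta> v"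
proof -
  have "v \<in> {w \<in> N. (w, v) \<in> (Gam \<beta>)\<^sup>*}" "v \<notin> {w \<in> N. (w, u) \<in> (Gam \<beta>)\<^sup>*}"
    using assms by auto
  then have "{w \<in> N. (w, u) \<in> (Gam \<beta>)\<^sup>*} \<subset> {w \<in> N. (w, v) \<in> (Gam \<beta>)\<^sup>*}"
    using rank_sub[OF assms(1)] by blast
  then show ?thesis unfolding rank_def using finN by (intro psubset_card_mono) auto
qed

lemma Tmax_gt: "card N < Tmax Q"
  using cardN by (simp add: Tmax_def)

lemma sci1: "\<forall>b\<in>N. \<forall>b'\<in>N. sc b = sc b' \<longleftrightarrow> ((b, b') \<in> E\<^sup>* \<and> (b', b) \<in> E\<^sup>*)"
  using sci by (simp add: scc_indexing_def Let_def)

lemma sci2: "\<forall>b\<in>N. \<forall>b'\<in>N. (b, b') \<in> E\<^sup>* \<and> sc b \<noteq> sc b' \<longrightarrow> sc b < sc b'"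
  using sci by (simp add: scc_indexing_def Let_def)

lemma sci3: "\<exists>m. sc ` N = {1..m}"
  using sci by (simp add: scc_indexing_def Let_def)

lemma sc_le: "b \<in> N \<Longrightarrow> sc b \<le> card N"
proof -
  assume bN: "b \<in> N"
  obtain m where m: "sc ` N = {1..m}" using sci3 by blast
  have "sc b \<in> {1..m}" using bN m by blast
  then have "sc b \<le> m" by simp
  also have "m = card (sc ` N)" using m by simp
  also have "\<dots> \<le> card N" using finN by (rule card_image_le)
  finally show ?thesis .
qed

lemma sc_same: "(b, b') \<in> E \<Longrightarrow> (b', b) \<in> E\<^sup>* \<Longrightarrow> sc b = sc b'"
proof -
  assume h: "(b, b') \<in> E" "(b', b) \<in> E\<^sup>*"
  then have "b \<in> N" "b' \<in> N" using E_N by auto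
  moreover have "(b, b') \<in> E\<^sup>*" using h(1) by simp
  ultimately show ?thesis using sci1 h(2) by blast
qed

lemma sc_mono: "(b, b') \<in> E \<Longrightarrow> sc b \<le> sc b'"
proof -
  assume h: "(b, b') \<in> E"
  then have "b \<in> N" "b' \<in> N" using E_N by auto
  moreover have "(b, b') \<in> E\<^sup>*" using h by simp
  ultimately have "sc b \<noteq> sc b' \<longrightarrow> sc b < sc b'" using sci2 by blast
  then show ?thesis by linarith
qed

definition Inv :: "('f,'v) tstate \<Rightarrow> bool" where
  "Inv s = (case s of (b, c, cT, \<alpha>) \<Rightarrow> b \<in> N \<and> distinct \<alpha> \<and> set \<alpha> \<subseteq> qV Q \<and>
     (\<forall>d<length \<alpha>. c d \<le> rank (take d \<alpha>) b \<and>
        ((\<not> prefix (take (Suc d) \<alpha>) (stack run b) \<or> cT < sc b) \<longrightarrow> (c d = 0 \<or> c d < rank (take d \<alpha>) b))) \<and>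
     (c (length \<alpha>) = 0 \<or> c (length \<alpha>) < rank \<alpha> b))"

lemma pop_inv:
  assumes I: "Inv (b, c, cT, \<alpha>)" and ne: "\<alpha> \<noteq> []" and w: "cT < sc b \<or> \<not> prefix \<alpha> (stack run b)"
  shows "Inv (b, c, cT, butlast \<alpha>)"
proof -
  define L' where "L' = length \<alpha> - 1"
  have lenb: "length (butlast \<alpha>) = L'" by (simp add: L'_def)
  have L'lt: "L' < length \<alpha>" using ne by (simp add: L'_def)
  have tk: "take d (butlast \<alpha>) = take d \<alpha>" if "d \<le> L'" for d
    using that by (simp add: butlast_conv_take L'_def min_def)
  have bt: "butlast \<alpha> = take L' \<alpha>" by (simp add: butlast_conv_take L'_def)
  have tS: "take (Suc L') \<alpha> = \<alpha>" using ne by (simp add: L'_def)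
  have I': "b \<in> N" "distinct \<alpha>" "set \<alpha> \<subseteq> qV Q"
    "\<forall>d<length \<alpha>. c d \<le> rank (take d \<alpha>) b \<and>
        ((\<not> prefix (take (Suc d) \<alpha>) (stack run b) \<or> cT < sc b) \<longrightarrow> (c d = 0 \<or> c d < rank (take d \<alpha>) b))"
    using I by (auto simp: Inv_def)
  have A: "\<forall>d<length (butlast \<alpha>). c d \<le> rank (take d (butlast \<alpha>)) b \<and>
        ((\<not> prefix (take (Suc d) (butlast \<alpha>)) (stack run b) \<or> cT < sc b) \<longrightarrow>
           (c d = 0 \<or> c d < rank (take d (butlast \<alpha>)) b))"
  proof (intro allI impI)
    fix d assume d: "d < length (butlast \<alpha>)"
    then have "d < length \<alpha>" "Suc d \<le> L'" "d \<le> L'" using lenb L'lt by auto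
    then show "c d \<le> rank (take d (butlast \<alpha>)) b \<and>
        ((\<not> prefix (take (Suc d) (butlast \<alpha>)) (stack run b) \<or> cT < sc b) \<longrightarrow>
           (c d = 0 \<or> c d < rank (take d (butlast \<alpha>)) b))"
      using I'(4) tk by simp
  qed
  have B: "c (length (butlast \<alpha>)) = 0 \<or> c (length (butlast \<alpha>)) < rank (butlast \<alpha>) b"
    using I'(4)[rule_format, OF L'lt] w tS bt lenb by auto
  show ?thesis unfolding Inv_def using I' A B
    by (auto simp: distinct_butlast dest: in_set_butlastD)
qed

lemma move_inv: "Inv (b, c, cT, []) \<Longrightarrow> Inv (b, c, cT', [])"
  by (simp add: Inv_def)

lemma prefix_distinct: "prefix xs ys \<Longrightarrow> distinct ys \<Longrightarrow> distinct xs"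
  by (auto simp: prefix_def)

lemma push_inv:
  assumes I: "Inv (b, c, cT, \<alpha>)" and nc: "\<not> cT < sc b" and px: "prefix (\<alpha> @ [X]) (stack run b)"
  shows "Inv (b, c(length \<alpha> := c (length \<alpha>) + 1, Suc (length \<alpha>) := 0), cT, \<alpha> @ [X])"
proof -
  let ?k = "length \<alpha>"
  let ?c = "c(?k := c ?k + 1, Suc ?k := 0)"
  have I': "b \<in> N"
    "\<forall>d<length \<alpha>. c d \<le> rank (take d \<alpha>) b \<and>
        ((\<not> prefix (take (Suc d) \<alpha>) (stack run b) \<or> cT < sc b) \<longrightarrow> (c d = 0 \<or> c d < rank (take d \<alpha>) b))"
    "c ?k = 0 \<or> c ?k < rank \<alpha> b"
    using I by (auto simp: Inv_def)
  have dist: "distinct (\<alpha> @ [X])" using prefix_distinct[OF px stack_distinct] .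
  have sub: "set (\<alpha> @ [X]) \<subseteq> qV Q" using set_mono_prefix[OF px] stack_V by blast
  have A: "\<forall>d<length (\<alpha> @ [X]). ?c d \<le> rank (take d (\<alpha> @ [X])) b \<and>
        ((\<not> prefix (take (Suc d) (\<alpha> @ [X])) (stack run b) \<or> cT < sc b) \<longrightarrow>
           (?c d = 0 \<or> ?c d < rank (take d (\<alpha> @ [X])) b))"
  proof (intro allI impI)
    fix d assume d: "d < length (\<alpha> @ [X])"
    show "?c d \<le> rank (take d (\<alpha> @ [X])) b \<and>
        ((\<not> prefix (take (Suc d) (\<alpha> @ [X])) (stack run b) \<or> cT < sc b) \<longrightarrow>
           (?c d = 0 \<or> ?c d < rank (take d (\<alpha> @ [X])) b))"
    proof (cases "d < ?k")
      case True
      then have "take d (\<alpha> @ [X]) = take d \<alpha>" "take (Suc d) (\<alpha> @ [X]) = take (Suc d) \<alpha>" by auto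
      then show ?thesis using I'(2) True by simp
    next
      case False
      then have dk: "d = ?k" using d by simp
      have "c ?k + 1 \<le> rank \<alpha> b" using I'(3) rank_pos[OF I'(1)] by auto
      then show ?thesis using dk px nc by simp
    qed
  qed
  have B: "?c (length (\<alpha> @ [X])) = 0" by simp
  show ?thesis unfolding Inv_def using I'(1) dist sub A B by simp
qed

lemma act_inv:
  assumes I: "Inv (b, c, cT, \<alpha>)" and st: "\<alpha> = stack run b" and nc: "\<not> cT < sc b"
    and e: "(b, b') \<in> E"
    and cc: "\<forall>d\<le>length \<alpha>. c' d = 0 \<or> (c' d = c d \<and> (\<forall>Y\<in>set (take d \<alpha>). \<not> is_dec Q \<pi> b Y))"
  shows "Inv (b', c', cT, \<alpha>)"
proof -
  have I': "b \<in> N" "distinct \<alpha>" "set \<alpha> \<subseteq> qV Q"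
    "\<forall>d<length \<alpha>. c d \<le> rank (take d \<alpha>) b \<and>
        ((\<not> prefix (take (Suc d) \<alpha>) (stack run b) \<or> cT < sc b) \<longrightarrow> (c d = 0 \<or> c d < rank (take d \<alpha>) b))"
    "c (length \<alpha>) = 0 \<or> c (length \<alpha>) < rank \<alpha> b"
    using I by (auto simp: Inv_def)
  have b'N: "b' \<in> N" using e E_N by blast
  have scbb: "sc b \<le> cT" using nc by simp
  have G: "(b, b') \<in> Gam (take d \<alpha>)" if "\<forall>Y\<in>set (take d \<alpha>). \<not> is_dec Q \<pi> b Y" for d
    using e that st take_is_prefix by (auto simp: Gam_def)
  have A: "\<forall>d<length \<alpha>. c' d \<le> rank (take d \<alpha>) b' \<and>
        ((\<not> prefix (take (Suc d) \<alpha>) (stack run b') \<or> cT < sc b') \<longrightarrow> (c' d = 0 \<or> c' d < rank (take d \<alpha>) b'))"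
  proof (intro allI impI)
    fix d assume d: "d < length \<alpha>"
    show "c' d \<le> rank (take d \<alpha>) b' \<and>
        ((\<not> prefix (take (Suc d) \<alpha>) (stack run b') \<or> cT < sc b') \<longrightarrow> (c' d = 0 \<or> c' d < rank (take d \<alpha>) b'))"
    proof (cases "c' d = 0")
      case True then show ?thesis by simp
    next
      case False
      have "c' d = 0 \<or> (c' d = c d \<and> (\<forall>Y\<in>set (take d \<alpha>). \<not> is_dec Q \<pi> b Y))"
        using cc d by simp
      then have cd: "c' d = c d" and nd: "\<forall>Y\<in>set (take d \<alpha>). \<not> is_dec Q \<pi> b Y" using False by auto
      have g: "(b, b') \<in> Gam (take d \<alpha>)" using G nd by blast
      have r1: "c d \<le> rank (take d \<alpha>) b'" using I'(4) d rank_mono[OF g] by (meson order_trans)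
      have r2: "c d < rank (take d \<alpha>) b'"
        if h: "\<not> prefix (take (Suc d) \<alpha>) (stack run b') \<or> cT < sc b'"
      proof -
        have "(b', b) \<notin> (Gam (take d \<alpha>))\<^sup>*"
        proof
          assume bk: "(b', b) \<in> (Gam (take d \<alpha>))\<^sup>*"
          show False
          proof (cases "cT < sc b'")
            case True
            have "(b', b) \<in> E\<^sup>*" using bk rtrancl_mono[OF Gam_E] by blast
            then have "sc b = sc b'" using sc_same e by blast
            then show False using True scbb by simp
          next
            case False
            then have np: "\<not> prefix (take (Suc d) \<alpha>) (stack run b')" using h by simp
            have tk: "take (Suc d) \<alpha> = take d \<alpha> @ [\<alpha> ! d]" using d by (simp add: take_Suc_conv_app_nth)
            have "prefix (take d \<alpha> @ [\<alpha> ! d]) (stack run b)" using tk st take_is_prefix by metis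
            then have "prefix (take d \<alpha> @ [\<alpha> ! d]) (stack run b')" using KL[OF g bk] by blast
            then show False using np tk by simp
          qed
        qed
        then have "rank (take d \<alpha>) b < rank (take d \<alpha>) b'" using rank_strict g b'N by blast
        then show ?thesis using I'(4) d by (meson order_le_less_trans)
      qed
      show ?thesis using cd r1 r2 by auto
    qed
  qed
  have B: "c' (length \<alpha>) = 0 \<or> c' (length \<alpha>) < rank \<alpha> b'"
  proof (cases "c' (length \<alpha>) = 0")
    case True then show ?thesis by simp
  next
    case False
    have "c' (length \<alpha>) = 0 \<or> (c' (length \<alpha>) = c (length \<alpha>) \<and> (\<forall>Y\<in>set (take (length \<alpha>) \<alpha>). \<not> is_dec Q \<pi> b Y))"
      using cc[rule_format, of "length \<alpha>"] by simp
    then have cd: "c' (length \<alpha>) = c (length \<alpha>)" and nd: "\<forall>Y\<in>set (take (length \<alpha>) \<alpha>). \<not> is_dec Q \<pi> b Y"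
      using False by auto
    have g: "(b, b') \<in> Gam \<alpha>" using G[of "length \<alpha>"] nd by simp
    show ?thesis using I'(5) cd rank_mono[OF g] False by auto
  qed
  show ?thesis unfolding Inv_def using b'N I'(2,3) A B by simp
qed

end


context ctx
begin

abbreviation "PS \<equiv> pistar Q \<pi> sc run"
abbreviation "T \<equiv> t_rel Q PS"

definition dcond :: "'a \<Rightarrow> 'v list \<Rightarrow> 'v \<Rightarrow> nat \<Rightarrow> bool" where
  "dcond a \<alpha> X d = (qN Q a X = Some Dec \<and> 1 \<le> d \<and> d \<le> length \<alpha> \<and> \<alpha> ! (d - 1) = X
       \<and> (\<forall>d'. 1 \<le> d' \<and> d' < d \<longrightarrow> qN Q a (\<alpha> ! (d' - 1)) \<noteq> Some Dec))"

lemma ps1: "cT < sc b \<Longrightarrow> \<alpha> \<noteq> [] \<Longrightarrow> PS (b, c, cT, \<alpha>) = Some (Pop (last \<alpha>) (length \<alpha>))"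
  by simp

lemma ps2: "cT < sc b \<Longrightarrow> PS (b, c, cT, []) = Some Move"
  by simp

lemma ps3: "\<not> cT < sc b \<Longrightarrow> \<alpha> \<noteq> [] \<Longrightarrow> \<not> prefix \<alpha> (stack run b) \<Longrightarrow>
    PS (b, c, cT, \<alpha>) = Some (Pop (last \<alpha>) (length \<alpha>))"
  by simp

lemma ps4: "\<not> cT < sc b \<Longrightarrow> prefix \<alpha> (stack run b) \<Longrightarrow> (\<exists>X. prefix (\<alpha> @ [X]) (stack run b)) \<Longrightarrow>
    PS (b, c, cT, \<alpha>) = Some (Push (SOME X. prefix (\<alpha> @ [X]) (stack run b)) (length \<alpha>))"
  by simp

lemma ps5a: "\<not> cT < sc b \<Longrightarrow> prefix \<alpha> (stack run b) \<Longrightarrow> \<not> (\<exists>X. prefix (\<alpha> @ [X]) (stack run b)) \<Longrightarrow>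
    \<pi> b = Some a \<Longrightarrow> \<not> decrements_some Q a \<Longrightarrow> PS (b, c, cT, \<alpha>) = Some (Act a)"
  by simp

lemma ps5b: "\<not> cT < sc b \<Longrightarrow> prefix \<alpha> (stack run b) \<Longrightarrow> \<not> (\<exists>X. prefix (\<alpha> @ [X]) (stack run b)) \<Longrightarrow>
    \<pi> b = Some a \<Longrightarrow> decrements_some Q a \<Longrightarrow> (\<exists>X d. dcond a \<alpha> X d) \<Longrightarrow>
    PS (b, c, cT, \<alpha>) = Some (case (SOME (X, d). dcond a \<alpha> X d) of (X, d) \<Rightarrow> DAct a X d)"
  unfolding dcond_def by simp

lemma ps5c: "\<not> cT < sc b \<Longrightarrow> prefix \<alpha> (stack run b) \<Longrightarrow> \<not> (\<exists>X. prefix (\<alpha> @ [X]) (stack run b)) \<Longrightarrow>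
    \<pi> b = Some a \<Longrightarrow> decrements_some Q a \<Longrightarrow> \<not> (\<exists>X d. dcond a \<alpha> X d) \<Longrightarrow>
    PS (b, c, cT, \<alpha>) = None"
  unfolding dcond_def by simp

lemma ps5n: "\<not> cT < sc b \<Longrightarrow> prefix \<alpha> (stack run b) \<Longrightarrow> \<not> (\<exists>X. prefix (\<alpha> @ [X]) (stack run b)) \<Longrightarrow>
    \<pi> b = None \<Longrightarrow> PS (b, c, cT, \<alpha>) = None"
  by simp

lemma prefix_full: "prefix xs ys \<Longrightarrow> \<not> (\<exists>X. prefix (xs @ [X]) ys) \<Longrightarrow> xs = ys"
proof -
  assume p: "prefix xs ys" and n: "\<not> (\<exists>X. prefix (xs @ [X]) ys)"
  from p obtain zs where zs: "ys = xs @ zs" by (auto simp: prefix_def)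
  show "xs = ys"
  proof (cases zs)
    case Nil then show ?thesis using zs by simp
  next
    case (Cons z zs')
    then have "prefix (xs @ [z]) ys" using zs by (simp add: prefix_def)
    then show ?thesis using n by blast
  qed
qed

lemma len_V: "distinct \<alpha> \<Longrightarrow> set \<alpha> \<subseteq> qV Q \<Longrightarrow> length \<alpha> \<le> card (qV Q)"
  by (metis distinct_card card_mono finV)

lemma Inv_basic: "Inv (b, c, cT, \<alpha>) \<Longrightarrow> b \<in> N \<and> distinct \<alpha> \<and> set \<alpha> \<subseteq> qV Q \<and> length \<alpha> \<le> card (qV Q)"
  using len_V by (auto simp: Inv_def)

lemma Inv_top: "Inv (b, c, cT, \<alpha>) \<Longrightarrow> c (length \<alpha>) = 0 \<or> c (length \<alpha>) < rank \<alpha> b"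
  by (simp add: Inv_def)

lemma dcond_exists:
  assumes bN: "b \<in> N" and a: "\<pi> b = Some a" and ds: "decrements_some Q a"
  shows "\<exists>X d. dcond a (stack run b) X d"
proof -
  let ?s = "stack run b"
  obtain X0 where "qN Q a X0 = Some Dec" using ds by (auto simp: decrements_some_def)
  then obtain Y where Y: "Y \<in> set ?s" "qN Q a Y = Some Dec" using dec_in_stack bN a by blast
  then obtain j where j: "j < length ?s" "qN Q a (?s ! j) = Some Dec" by (metis in_set_conv_nth)
  define j0 where "j0 = (LEAST j. j < length ?s \<and> qN Q a (?s ! j) = Some Dec)"
  have j0: "j0 < length ?s" "qN Q a (?s ! j0) = Some Dec"
    using LeastI[of "\<lambda>j. j < length ?s \<and> qN Q a (?s ! j) = Some Dec", OF conjI[OF j]] by (auto simp: j0_def)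
  have mn: "\<not> (qN Q a (?s ! j') = Some Dec)" if "j' < j0" for j'
  proof
    assume "qN Q a (?s ! j') = Some Dec"
    moreover have "j' < length ?s" using that j0 by simp
    ultimately have "j0 \<le> j'" unfolding j0_def by (intro Least_le) simp
    then show False using that by simp
  qed
  have "dcond a ?s (?s ! j0) (Suc j0)"
    unfolding dcond_def using j0 mn by auto
  then show ?thesis by blast
qed

lemma dcond_some:
  assumes "\<exists>X d. dcond a \<alpha> X d"
  obtains X d where "(SOME (X, d). dcond a \<alpha> X d) = (X, d)" "dcond a \<alpha> X d"
proof -
  from assms obtain p where "(\<lambda>(X, d). dcond a \<alpha> X d) p" by auto
  then have "(\<lambda>(X, d). dcond a \<alpha> X d) (SOME p. (\<lambda>(X, d). dcond a \<alpha> X d) p)" by (rule someI)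
  then show ?thesis using that by (cases "SOME p. (\<lambda>(X, d). dcond a \<alpha> X d) p") auto
qed

lemma Tstep_inv:
  assumes I: "Inv s" and st: "(s, s') \<in> T"
  shows "Inv s'"
proof -
  obtain b c cT \<alpha> where s: "s = (b, c, cT, \<alpha>)" by (cases s) auto
  obtain A where A: "\<not> td_goal Q b" "PS s = Some A" "t_app Q A s" "t_succ Q A s s'"
    using st s by (auto simp: t_rel_def t_goal_def)
  have Ib: "b \<in> N" "distinct \<alpha>" "set \<alpha> \<subseteq> qV Q" "length \<alpha> \<le> card (qV Q)"
    using Inv_basic I s by auto
  show ?thesis
  proof (cases "cT < sc b")
    case True
    show ?thesis
    proof (cases "\<alpha> = []")
      case False
      then have "A = Pop (last \<alpha>) (length \<alpha>)" using ps1[OF True] A(2) s by simp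
      then have "s' = (b, c, cT, butlast \<alpha>)" using A(4) s by simp
      then show ?thesis using pop_inv I s True False by simp
    next
      case nil: True
      then have "A = Move" using ps2[OF True] A(2) s by simp
      then have "s' = (b, c, cT + 1, [])" using A(4) s nil by simp
      then show ?thesis using move_inv I s nil by simp
    qed
  next
    case nc: False
    show ?thesis
    proof (cases "\<alpha> \<noteq> [] \<and> \<not> prefix \<alpha> (stack run b)")
      case True
      then have "A = Pop (last \<alpha>) (length \<alpha>)" using ps3[OF nc] A(2) s by simp
      then have "s' = (b, c, cT, butlast \<alpha>)" using A(4) s by simp
      then show ?thesis using pop_inv I s True by simp
    next
      case False
      then have pf: "prefix \<alpha> (stack run b)" by auto
      show ?thesis
      proof (cases "\<exists>X. prefix (\<alpha> @ [X]) (stack run b)")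
        case True
        define X where "X = (SOME X. prefix (\<alpha> @ [X]) (stack run b))"
        have pX: "prefix (\<alpha> @ [X]) (stack run b)" using True unfolding X_def by (rule someI_ex)
        have "A = Push X (length \<alpha>)" using ps4[OF nc pf True] A(2) s X_def by simp
        then have "s' = (b, c(length \<alpha> := c (length \<alpha>) + 1, Suc (length \<alpha>) := 0), cT, \<alpha> @ [X])"
          using A(4) s by simp
        then show ?thesis using push_inv[OF _ nc pX] I s by simp
      next
        case noext: False
        have ast: "\<alpha> = stack run b" using prefix_full pf noext by blast
        obtain a where a: "\<pi> b = Some a"
          using ps5n[OF nc pf noext] A(2) s by (cases "\<pi> b") auto
        show ?thesis
        proof (cases "decrements_some Q a")
          case False
          then have "A = Act a" using ps5a[OF nc pf noext a] A(2) s by simp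
          then obtain b' where b': "td_succ Q a b b'" "s' = (b', c, cT, \<alpha>)" "td_app Q a b"
            using A(3,4) s by auto
          have "(b, b') \<in> E" using b' a A(1) Ib(1) by (auto simp: pg_edges_def pg_rel_def)
          moreover have "\<forall>d\<le>length \<alpha>. c d = 0 \<or> (c d = c d \<and> (\<forall>Y\<in>set (take d \<alpha>). \<not> is_dec Q \<pi> b Y))"
            using False a by (auto simp: is_dec_def decrements_some_def)
          ultimately have "Inv (b', c, cT, \<alpha>)" using act_inv[OF _ ast nc] I s by blast
          then show ?thesis using b' by simp
        next
          case True
          have ex: "\<exists>X d. dcond a \<alpha> X d"
          proof (rule ccontr)
            assume "\<not> ?thesis"
            then have "PS s = None" using ps5c[OF nc pf noext a True] s by simp
            then show False using A(2) by simp
          qed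
          obtain X e where Xe: "(SOME (X, d). dcond a \<alpha> X d) = (X, e)" "dcond a \<alpha> X e"
            using dcond_some[OF ex] by blast
          have "A = DAct a X e" using ps5b[OF nc pf noext a True ex] A(2) s Xe(1) by simp
          then obtain b' where b': "td_succ Q a b b'" "td_app Q a b"
            "s' = (b', \<lambda>d'. if e \<le> d' \<and> d' \<le> card (qV Q) then 0 else c d', cT, \<alpha>)"
            using A(3,4) s by auto
          define c' where "c' = (\<lambda>d'. if e \<le> d' \<and> d' \<le> card (qV Q) then 0 else c d')"
          have "(b, b') \<in> E" using b' a A(1) Ib(1) by (auto simp: pg_edges_def pg_rel_def)
          moreover have "\<forall>d\<le>length \<alpha>. c' d = 0 \<or> (c' d = c d \<and> (\<forall>Y\<in>set (take d \<alpha>). \<not> is_dec Q \<pi> b Y))"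
          proof (intro allI impI)
            fix d assume d: "d \<le> length \<alpha>"
            show "c' d = 0 \<or> (c' d = c d \<and> (\<forall>Y\<in>set (take d \<alpha>). \<not> is_dec Q \<pi> b Y))"
            proof (cases "e \<le> d")
              case True
              then show ?thesis using d Ib(4) by (simp add: c'_def)
            next
              case False
              have "\<not> is_dec Q \<pi> b Y" if Y: "Y \<in> set (take d \<alpha>)" for Y
              proof -
                obtain j where j: "j < length (take d \<alpha>)" "take d \<alpha> ! j = Y" using Y by (metis in_set_conv_nth)
                then have "j < d" "\<alpha> ! j = Y" by auto
                then have "qN Q a (\<alpha> ! (Suc j - 1)) \<noteq> Some Dec"
                  using Xe(2) False unfolding dcond_def by (metis Suc_leI le_less_trans not_le zero_less_Suc One_nat_def)
                then show ?thesis using a \<open>\<alpha> ! j = Y\<close> by (auto simp: is_dec_def)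
              qed
              then show ?thesis using False by (simp add: c'_def)
            qed
          qed
          ultimately have "Inv (b', c', cT, \<alpha>)" using act_inv[OF _ ast nc] I s by blast
          then show ?thesis using b' by (simp add: c'_def)
        qed
      qed
    qed
  qed
qed

end


context ctx
begin

lemma Tstep_intro:
  "\<not> td_goal Q b \<Longrightarrow> PS (b, c, cT, \<alpha>) = Some A \<Longrightarrow> t_app Q A (b, c, cT, \<alpha>) \<Longrightarrow>
   t_succ Q A (b, c, cT, \<alpha>) s' \<Longrightarrow> ((b, c, cT, \<alpha>), s') \<in> T"
  by (simp add: t_rel_def t_goal_def)

lemma pop_all:
  "Inv (b, c, cT, \<alpha>) \<Longrightarrow> \<not> td_goal Q b \<Longrightarrow> cT < sc b \<Longrightarrow>
   ((b, c, cT, \<alpha>), (b, c, cT, [])) \<in> T\<^sup>* \<and> Inv (b, c, cT, [])"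
proof (induction \<alpha> rule: rev_induct)
  case Nil then show ?case by simp
next
  case (snoc x xs)
  let ?s = "(b, c, cT, xs @ [x])"
  have Ib: "b \<in> N" "distinct (xs @ [x])" "set (xs @ [x]) \<subseteq> qV Q" "length (xs @ [x]) \<le> card (qV Q)"
    using Inv_basic snoc.prems(1) by blast+
  have ps: "PS ?s = Some (Pop x (length (xs @ [x])))" using ps1[OF snoc.prems(3)] by simp
  have ap: "t_app Q (Pop x (length (xs @ [x]))) ?s" using Ib by (auto simp: nth_append)
  have sc: "t_succ Q (Pop x (length (xs @ [x]))) ?s (b, c, cT, xs)" by simp
  have st: "(?s, (b, c, cT, xs)) \<in> T" using Tstep_intro[OF snoc.prems(2) ps ap sc] .
  have "Inv (b, c, cT, xs)" using Tstep_inv[OF snoc.prems(1) st] .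
  then have "((b, c, cT, xs), (b, c, cT, [])) \<in> T\<^sup>* \<and> Inv (b, c, cT, [])"
    using snoc.IH snoc.prems(2,3) by blast
  then show ?case using st by (meson converse_rtrancl_into_rtrancl)
qed

lemma move_all:
  "Inv (b, c, cT, []) \<Longrightarrow> \<not> td_goal Q b \<Longrightarrow>
   \<exists>cT'. ((b, c, cT, []), (b, c, cT', [])) \<in> T\<^sup>* \<and> Inv (b, c, cT', []) \<and> \<not> cT' < sc b"
proof (induction "sc b - cT" arbitrary: cT)
  case 0
  then show ?case by (intro exI[of _ cT]) auto
next
  case (Suc n)
  let ?s = "(b, c, cT, [])"
  have lt: "cT < sc b" using Suc.hyps(2) by simp
  have bN: "b \<in> N" using Inv_basic Suc.prems(1) by blast
  have ps: "PS ?s = Some Move" using ps2[OF lt] .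
  have "cT < Tmax Q" using lt sc_le[OF bN] Tmax_gt by linarith
  then have ap: "t_app Q Move ?s" by simp
  have sc: "t_succ Q Move ?s (b, c, cT + 1, [])" by simp
  have st: "(?s, (b, c, cT + 1, [])) \<in> T" using Tstep_intro[OF Suc.prems(2) ps ap sc] .
  have I2: "Inv (b, c, cT + 1, [])" using Tstep_inv[OF Suc.prems(1) st] .
  have "n = sc b - (cT + 1)" using Suc.hyps(2) by simp
  then obtain cT' where "((b, c, cT + 1, []), (b, c, cT', [])) \<in> T\<^sup>*" "Inv (b, c, cT', [])" "\<not> cT' < sc b"
    using Suc.hyps(1) I2 Suc.prems(2) by blast
  then show ?case using st by (meson converse_rtrancl_into_rtrancl)
qed

lemma pop_np:
  "Inv (b, c, cT, \<alpha>) \<Longrightarrow> \<not> td_goal Q b \<Longrightarrow> \<not> cT < sc b \<Longrightarrow>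
   \<exists>\<alpha>'. prefix \<alpha>' (stack run b) \<and> ((b, c, cT, \<alpha>), (b, c, cT, \<alpha>')) \<in> T\<^sup>* \<and> Inv (b, c, cT, \<alpha>')"
proof (induction \<alpha> rule: rev_induct)
  case Nil then show ?case by (intro exI[of _ "[]"]) auto
next
  case (snoc x xs)
  let ?s = "(b, c, cT, xs @ [x])"
  show ?case
  proof (cases "prefix (xs @ [x]) (stack run b)")
    case True then show ?thesis using snoc.prems by blast
  next
    case False
    have Ib: "b \<in> N" "distinct (xs @ [x])" "set (xs @ [x]) \<subseteq> qV Q" "length (xs @ [x]) \<le> card (qV Q)"
      using Inv_basic snoc.prems(1) by blast+
    have ps: "PS ?s = Some (Pop x (length (xs @ [x])))" using ps3[OF snoc.prems(3) _ False] by simp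
    have ap: "t_app Q (Pop x (length (xs @ [x]))) ?s" using Ib by (auto simp: nth_append)
    have sc: "t_succ Q (Pop x (length (xs @ [x]))) ?s (b, c, cT, xs)" by simp
    have st: "(?s, (b, c, cT, xs)) \<in> T" using Tstep_intro[OF snoc.prems(2) ps ap sc] .
    have "Inv (b, c, cT, xs)" using Tstep_inv[OF snoc.prems(1) st] .
    then obtain \<alpha>' where "prefix \<alpha>' (stack run b)" "((b, c, cT, xs), (b, c, cT, \<alpha>')) \<in> T\<^sup>*" "Inv (b, c, cT, \<alpha>')"
      using snoc.IH snoc.prems(2,3) by blast
    then show ?thesis using st by (meson converse_rtrancl_into_rtrancl)
  qed
qed

lemma push_all:
  "Inv (b, c, cT, \<alpha>) \<Longrightarrow> \<not> td_goal Q b \<Longrightarrow> \<not> cT < sc b \<Longrightarrow> prefix \<alpha> (stack run b) \<Longrightarrow>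
   \<exists>c'. ((b, c, cT, \<alpha>), (b, c', cT, stack run b)) \<in> T\<^sup>* \<and> Inv (b, c', cT, stack run b)"
proof (induction "length (stack run b) - length \<alpha>" arbitrary: \<alpha> c)
  case 0
  obtain zs where zs: "stack run b = \<alpha> @ zs" using 0(5) by (auto simp: prefix_def)
  then have "\<alpha> = stack run b" using 0(1) by simp
  then show ?case using 0 by (intro exI[of _ c]) auto
next
  case (Suc n)
  let ?s = "(b, c, cT, \<alpha>)"
  have ex: "\<exists>X. prefix (\<alpha> @ [X]) (stack run b)"
  proof (rule ccontr)
    assume "\<not> ?thesis"
    then have "\<alpha> = stack run b" using prefix_full Suc.prems(4) by blast
    then show False using Suc.hyps(2) by simp
  qed
  define X where "X = (SOME X. prefix (\<alpha> @ [X]) (stack run b))"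
  have pX: "prefix (\<alpha> @ [X]) (stack run b)" using ex unfolding X_def by (rule someI_ex)
  have Ib: "b \<in> N" "distinct \<alpha>" "set \<alpha> \<subseteq> qV Q" using Inv_basic Suc.prems(1) by blast+
  have ps: "PS ?s = Some (Push X (length \<alpha>))" using ps4[OF Suc.prems(3,4) ex] X_def by simp
  have dX: "distinct (\<alpha> @ [X])" using prefix_distinct[OF pX stack_distinct] .
  have XV: "X \<in> qV Q" using set_mono_prefix[OF pX] stack_V[of b] by auto
  have "length (\<alpha> @ [X]) \<le> length (stack run b)" using pX by (rule prefix_length_le)
  also have "\<dots> \<le> card (qV Q)" using len_V stack_distinct stack_V by blast
  finally have lV: "length \<alpha> < card (qV Q)" by simp
  have "c (length \<alpha>) < Tmax Q"
    using Inv_top[OF Suc.prems(1)] rank_le[of \<alpha> b] Tmax_gt by linarith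
  then have ap: "t_app Q (Push X (length \<alpha>)) ?s" using XV lV dX by simp
  let ?c = "c(length \<alpha> := c (length \<alpha>) + 1, Suc (length \<alpha>) := 0)"
  have sc: "t_succ Q (Push X (length \<alpha>)) ?s (b, ?c, cT, \<alpha> @ [X])" by simp
  have st: "(?s, (b, ?c, cT, \<alpha> @ [X])) \<in> T" using Tstep_intro[OF Suc.prems(2) ps ap sc] .
  have I2: "Inv (b, ?c, cT, \<alpha> @ [X])" using Tstep_inv[OF Suc.prems(1) st] .
  have "n = length (stack run b) - length (\<alpha> @ [X])" using Suc.hyps(2) by simp
  then obtain c' where "((b, ?c, cT, \<alpha> @ [X]), (b, c', cT, stack run b)) \<in> T\<^sup>*" "Inv (b, c', cT, stack run b)"
    using Suc.hyps(1)[of "\<alpha> @ [X]" ?c] I2 Suc.prems(2,3) pX by blast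
  then show ?case using st by (meson converse_rtrancl_into_rtrancl)
qed

lemma act_step:
  assumes I: "Inv (b, c, cT, stack run b)" and nc: "\<not> cT < sc b" and ng: "\<not> td_goal Q b"
    and r: "(b, b') \<in> R"
  shows "\<exists>c'. ((b, c, cT, stack run b), (b', c', cT, stack run b)) \<in> T"
proof -
  let ?\<alpha> = "stack run b"
  let ?s = "(b, c, cT, ?\<alpha>)"
  obtain a where a: "\<pi> b = Some a" "td_app Q a b" "td_succ Q a b b'" using r by (auto simp: pg_rel_def)
  have bN: "b \<in> N" using Inv_basic I by blast
  have pf: "prefix ?\<alpha> ?\<alpha>" by simp
  have noext: "\<not> (\<exists>X. prefix (?\<alpha> @ [X]) ?\<alpha>)" using prefix_length_le by fastforce
  have ninc: "\<forall>Y. qN Q a Y = Some Inc \<longrightarrow> Y \<notin> set ?\<alpha>"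
  proof (intro allI impI notI)
    fix Y assume Y: "qN Q a Y = Some Inc" "Y \<in> set ?\<alpha>"
    then have "is_inc Q \<pi> b Y" using a(1) by (simp add: is_inc_def)
    then show False using stack_noinc Y(2) by blast
  qed
  show ?thesis
  proof (cases "decrements_some Q a")
    case False
    have ps: "PS ?s = Some (Act a)" using ps5a[OF nc pf noext a(1) False] .
    have ap: "t_app Q (Act a) ?s" using False a(2) ninc by simp
    have sc: "t_succ Q (Act a) ?s (b', c, cT, ?\<alpha>)" unfolding t_succ.simps using a(3) by blast
    show ?thesis using Tstep_intro[OF ng ps ap sc] by blast
  next
    case True
    have ex: "\<exists>X d. dcond a ?\<alpha> X d" using dcond_exists[OF bN a(1) True] .
    obtain X e where Xe: "(SOME (X, d). dcond a ?\<alpha> X d) = (X, e)" "dcond a ?\<alpha> X e"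
      using dcond_some[OF ex] by blast
    have ps: "PS ?s = Some (DAct a X e)" using ps5b[OF nc pf noext a(1) True ex] Xe(1) by simp
    have "length ?\<alpha> \<le> card (qV Q)" using len_V stack_distinct stack_V by blast
    then have ap: "t_app Q (DAct a X e) ?s" using Xe(2) a(2) ninc by (auto simp: dcond_def)
    have sc: "t_succ Q (DAct a X e) ?s
        (b', \<lambda>d'. if e \<le> d' \<and> d' \<le> card (qV Q) then 0 else c d', cT, ?\<alpha>)"
      unfolding t_succ.simps using a(3) by blast
    show ?thesis using Tstep_intro[OF ng ps ap sc] by blast
  qed
qed

lemma sim:
  assumes I: "Inv s" and b: "fst s = b" and ng: "\<not> td_goal Q b" and r: "(b, b') \<in> R"
  shows "\<exists>s'. (s, s') \<in> T\<^sup>* \<and> fst s' = b' \<and> Inv s'"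
proof -
  obtain c cT \<alpha> where s: "s = (b, c, cT, \<alpha>)" using b by (cases s) auto
  have "\<exists>c1 cT1 \<alpha>1. (s, (b, c1, cT1, \<alpha>1)) \<in> T\<^sup>* \<and> Inv (b, c1, cT1, \<alpha>1) \<and> \<not> cT1 < sc b"
  proof (cases "cT < sc b")
    case True
    have "(s, (b, c, cT, [])) \<in> T\<^sup>*" "Inv (b, c, cT, [])" using pop_all I s ng True by auto
    moreover obtain cT' where "((b, c, cT, []), (b, c, cT', [])) \<in> T\<^sup>*" "Inv (b, c, cT', [])" "\<not> cT' < sc b"
      using move_all calculation(2) ng by blast
    ultimately show ?thesis by (meson rtrancl_trans)
  next
    case False then show ?thesis using I s by blast
  qed
  then obtain c1 cT1 \<alpha>1 where s1: "(s, (b, c1, cT1, \<alpha>1)) \<in> T\<^sup>*" "Inv (b, c1, cT1, \<alpha>1)" "\<not> cT1 < sc b"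
    by blast
  obtain \<alpha>2 where s2: "prefix \<alpha>2 (stack run b)" "((b, c1, cT1, \<alpha>1), (b, c1, cT1, \<alpha>2)) \<in> T\<^sup>*" "Inv (b, c1, cT1, \<alpha>2)"
    using pop_np[OF s1(2) ng s1(3)] by blast
  obtain c3 where s3: "((b, c1, cT1, \<alpha>2), (b, c3, cT1, stack run b)) \<in> T\<^sup>*" "Inv (b, c3, cT1, stack run b)"
    using push_all[OF s2(3) ng s1(3) s2(1)] by blast
  obtain c4 where s4: "((b, c3, cT1, stack run b), (b', c4, cT1, stack run b)) \<in> T"
    using act_step[OF s3(2) s1(3) ng r] by blast
  have I4: "Inv (b', c4, cT1, stack run b)" using Tstep_inv[OF s3(2) s4] .
  have "(s, (b, c1, cT1, \<alpha>2)) \<in> T\<^sup>*" using s1(1) s2(2) by (rule rtrancl_trans)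
  then have "(s, (b, c3, cT1, stack run b)) \<in> T\<^sup>*" using s3(1) by (rule rtrancl_trans)
  then have "(s, (b', c4, cT1, stack run b)) \<in> T\<^sup>*" using s4 by (rule rtrancl_into_rtrancl)
  then show ?thesis using I4 by (intro exI[of _ "(b', c4, cT1, stack run b)"]) simp
qed

lemma Inv_init: "Inv (t_init Q)"
  by (simp add: Inv_def t_init_def N_init)

lemma reach_Inv: "(t_init Q, s) \<in> T\<^sup>* \<Longrightarrow> Inv s"
  by (induction rule: rtrancl_induct) (auto intro: Inv_init Tstep_inv)

lemma to_goal:
  assumes "(b, g) \<in> R\<^sup>*" "td_goal Q g"
  shows "\<forall>s. Inv s \<and> fst s = b \<longrightarrow> (\<exists>g'. (s, g') \<in> T\<^sup>* \<and> t_goal Q g')"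
  using assms(1)
proof (induction rule: converse_rtrancl_induct)
  case base
  show ?case
  proof (intro allI impI)
    fix s assume "Inv s \<and> fst s = g"
    then show "\<exists>g'. (s, g') \<in> T\<^sup>* \<and> t_goal Q g'"
      using assms(2) by (intro exI[of _ s]) (simp add: t_goal_def)
  qed
next
  case (step y z)
  show ?case
  proof (intro allI impI)
    fix s assume h: "Inv s \<and> fst s = y"
    show "\<exists>g'. (s, g') \<in> T\<^sup>* \<and> t_goal Q g'"
    proof (cases "td_goal Q y")
      case True
      then have "t_goal Q s" using h by (simp add: t_goal_def)
      then show ?thesis by (intro exI[of _ s] conjI) simp_all
    next
      case False
      obtain s' where s': "(s, s') \<in> T\<^sup>*" "fst s' = z" "Inv s'" using sim h False step(1) by blast
      then obtain g' where "(s', g') \<in> T\<^sup>*" "t_goal Q g'" using step(3) by blast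
      then show ?thesis using s'(1) by (meson rtrancl_trans)
    qed
  qed
qed

lemma main: "strong_cyclic Q PS"
  unfolding strong_cyclic_def
proof (intro allI impI)
  fix s assume "(t_init Q, s) \<in> T\<^sup>*"
  then have I: "Inv s" by (rule reach_Inv)
  then have "fst s \<in> N" by (cases s) (auto simp: Inv_def)
  then obtain g where "(fst s, g) \<in> R\<^sup>*" "td_goal Q g" using goal_reach by blast
  then show "\<exists>g. (s, g) \<in> T\<^sup>* \<and> t_goal Q g" using to_goal I by blast
qed

end

theorem theorem15:
  fixes Q :: "('f,'v,'a) qnp" and \<pi> :: "('f,'v,'a) policy"
    and sc :: "('f,'v) bstate \<Rightarrow> nat" and run :: "('f,'v) sieve_run"
  assumes "wf_qnp Q"
    and "is_policy Q \<pi>"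
    and "solves Q \<pi>"
    and "scc_indexing Q \<pi> sc"
    and "sieve_run Q \<pi> run"
  shows "strong_cyclic Q (pistar Q \<pi> sc run)"
proof -
  interpret ctx Q \<pi> sc run using assms by unfold_locales
  show ?thesis by (rule main)
qed

end
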